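(* Let $(Y_{i\,j})_{i,j\in\mathbb N}$ be i.i.d. real random variables with $\mathbb E[Y_{1\,1}]=0$, $\mathbb E[Y_{1\,1}^2]=1$, let $l_1,l_2\in\mathbb N$, $l:=l_1+l_2$, assume $\mathbb E[Y_{1\,1}^{2l}]<\infty$, and set $\alpha=\mathbb E[Y_{1\,1}^4]$. Let $V_l\subset\mathbb N$ with $\#V_l=l$, and let $\mathbf i,\mathbf k\in V_l^{l_1}$, $\mathbf j,\mathbf m\in V_l^{l_2}$ with $\#(\{\mathbf i\}\cup\{\mathbf k\}\cup\{\mathbf j\}\cup\{\mathbf m\})\ge l$. Define $W_{\mathbf i,\mathbf k,\mathbf j,\mathbf m}=\mathbb E[(Y_{i_1 k_1}Y_{i_2 k_1})\cdots(Y_{i_{l_1} k_{l_1}}Y_{i_1 k_{l_1}})\cdot(Y_{j_1 m_1}Y_{j_2 m_1})\cdots(Y_{j_{l_2} m_{l_2}}Y_{j_1 m_{l_2}})]$, $W_{\mathbf i,\mathbf k}=\mathbb E[(Y_{i_1 k_1}Y_{i_2 k_1})\cdots(Y_{i_{l_1} k_{l_1}}Y_{i_1 k_{l_1}})]$ and $W_{\mathbf j,\mathbf m}=\mathbb E[(Y_{j_1 m_1}Y_{j_2 m_1})\cdots(Y_{j_{l_2} m_{l_2}}Y_{j_1 m_{l_2}})]$. Then $$W_{\mathbf i,\mathbf k,\mathbf j,\mathbf m}-W_{\mathbf i,\mathbf k}W_{\mathbf j,\mathbf m}=\begin{cases}0,&\text{if }\#(\{\mathbf i\}\cup\{\mathbf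 k\}\cup\{\mathbf j\}\cup\{\mathbf m\})>l,\\ \alpha-1,&\text{if }\operatorname S((G_{\langle\mathbf i,\mathbf k\rangle},G_{\langle\mathbf j,\mathbf m\rangle}))\in\operatorname{Double\text{-}2\text{-}d\text{-}Ring}_2,\\1,&\text{if }\operatorname S((G_{\langle\mathbf i,\mathbf k\rangle},G_{\langle\mathbf j,\mathbf m\rangle}))\in\operatorname{Double\text{-}1\text{-}d\text{-}Ring}_{l_0}\text{ for some even }l_0\ge4,\\1,&\text{if }\operatorname S((G_{\langle\mathbf i,\mathbf k\rangle},G_{\langle\mathbf j,\mathbf m\rangle}))\in\operatorname{Double\text{-}2\text{-}d\text{-}Ring}_{l_0}\text{ for some even }l_0\ge4,\\0,&\text{otherwise.}\end{cases}$$
   Context: Vertices are positive integers with their natural order. $\{\mathbf i\}$ is the set of entries of a sequence $\mathbf i$; $\langle\mathbf i,\mathbf k\rangle=(i_1,k_1,\dots,i_{l_1},k_{l_1})$. For a sequence $\mathbf i=(i_1,\dots,i_N)$ of vertices, $G_{\mathbf i}$ is the directed multigraph with edges $1,\dots,N$ (own identity; loops/parallel edges allowed), edge $k<N$ from $i_k$ to $i_{k+1}$, edge $N$ from $i_N$ to $i_1$; its visited vertices are the entries of $\mathbf i$. Balanced leaf of $G_{\mathbf i}$ (only if $N>2$): a vertex $v$ occurring exactly once in $\mathbf i$, say $i_t=v$, with equal cyclic neighbours $i_{t-1}=i_{t+1}$ (indices mod $N$); removing it means deleting positions $t,t+1$ if $t<N$ and positions $N-1,N$ if $t=N$. A double-circuit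 multigraph is a pair $(G_{\mathbf i_1},G_{\mathbf i_2})$ of such graphs, viewed as one combined multigraph with the disjoint union of both edge sets. A balanced leaf of the pair is a vertex that is a balanced leaf of one of $G_{\mathbf i_1},G_{\mathbf i_2}$ and does not occur in the other sequence. The seed graph $\operatorname S((G_{\mathbf i_1},G_{\mathbf i_2}))$ is obtained by repeatedly removing the smallest balanced leaf of the pair (from the graph containing it) until no balanced leaf remains. Double ring types: let $l_0$ be even, $\#V=l_0$, and $\mathbf i_1,\mathbf i_2\in V^{l_0}$ each containing every vertex of $V$ exactly once, with the first entry of $\mathbf i_2$ occurring in $\mathbf i_1$ at an odd position. The pair $(G_{\mathbf i_1},G_{\mathbf i_2})$ lies in $\operatorname{Double\text{-}1\text{-}d\text{-}Ring}_{l_0}$ (only for $l_0\ge4$) if $\mathbf i_2$ is a cyclic shift of $\mathbf i_1$, and in $\operatorname{Double\text{-}2\text{-}d\text{-}Ring}_{l_0}$ if the reversed sequence $((\mathbf i_2)_{l_0},\dots,(\mathbf i_2)_1)$ is a cyclic shift of $\mathbf i_1$. (E.g. $\operatorname{Double\text{-}2\text{-}d\text{-}Ring}_2$ consists of the pairs $(G_{(v,w)},G_{(v,w)})$, $v\neq w$.) *)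

theory Defs
  imports "HOL-Probability.Probability"
begin

text \<open>A sequence of vertices (i_1,...,i_N) is represented by a list; the circuit
  multigraph G_i is determined by it.  Positions below are 0-based.\<close>

definition interleave :: "nat list \<Rightarrow> nat list \<Rightarrow> nat list" where
  "interleave xs ys = concat (map (\<lambda>(a,b). [a,b]) (zip xs ys))"

definition bal_leaf :: "nat list \<Rightarrow> nat \<Rightarrow> bool" where
  "bal_leaf xs v \<longleftrightarrow> length xs > 2 \<and> count_list xs v = 1 \<and>
     (\<exists>t < length xs. xs ! t = v \<and>
        xs ! ((t + length xs - 1) mod length xs) = xs ! ((t + 1) mod length xs))"

definition remove_leaf :: "nat list \<Rightarrow> nat \<Rightarrow> nat list" where
  "remove_leaf xs v = (let t = (THE t. t < length xs \<and> xs ! t = v) in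
     if t + 1 < length xs then take t xs @ drop (t + 2) xs
     else take (length xs - 2) xs)"

lemma length_remove_leaf_less:
  assumes "length xs > 2" shows "length (remove_leaf xs v) < length xs"
  using assms by (auto simp: remove_leaf_def Let_def)

definition pair_leaf :: "nat list \<times> nat list \<Rightarrow> nat \<Rightarrow> bool" where
  "pair_leaf p v \<longleftrightarrow> (bal_leaf (fst p) v \<and> v \<notin> set (snd p)) \<or>
                     (bal_leaf (snd p) v \<and> v \<notin> set (fst p))"

function seed :: "nat list \<times> nat list \<Rightarrow> nat list \<times> nat list" where
  "seed p = (if \<exists>v. pair_leaf p v then
     (let v = (LEAST v. pair_leaf p v) in
       if bal_leaf (fst p) v \<and> v \<notin> set (snd p)
       then seed (remove_leaf (fst p) v, snd p)
       else seed (fst p, remove_leaf (snd p) v))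
     else p)"
  by pat_completeness auto
termination
proof (relation "Wellfounded.measure (\<lambda>p. length (fst p) + length (snd p))")
  show "wf (Wellfounded.measure (\<lambda>p. length (fst p) + length (snd p)))" by simp
next
  fix p :: "nat list \<times> nat list" and v
  assume "\<exists>v. pair_leaf p v" "v = (LEAST v. pair_leaf p v)"
    "bal_leaf (fst p) v \<and> v \<notin> set (snd p)"
  then show "((remove_leaf (fst p) v, snd p), p) \<in> Wellfounded.measure (\<lambda>p. length (fst p) + length (snd p))"
    using length_remove_leaf_less by (auto simp: bal_leaf_def)
next
  fix p :: "nat list \<times> nat list" and v
  assume a: "\<exists>v. pair_leaf p v" "v = (LEAST v. pair_leaf p v)"
    "\<not> (bal_leaf (fst p) v \<and> v \<notin> set (snd p))"
  then have "pair_leaf p v" by (metis LeastI)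
  with a have "bal_leaf (snd p) v" by (auto simp: pair_leaf_def)
  then show "((fst p, remove_leaf (snd p) v), p) \<in> Wellfounded.measure (\<lambda>p. length (fst p) + length (snd p))"
    using length_remove_leaf_less by (auto simp: bal_leaf_def)
qed

definition ring_base :: "nat \<Rightarrow> nat list \<times> nat list \<Rightarrow> bool" where
  "ring_base l0 p \<longleftrightarrow> even l0 \<and> length (fst p) = l0 \<and> length (snd p) = l0 \<and>
     distinct (fst p) \<and> distinct (snd p) \<and> set (fst p) = set (snd p) \<and>
     (\<exists>t < l0. fst p ! t = snd p ! 0 \<and> even t)"
  (* 0-based even position = 1-based odd position *)

definition double_1_ring :: "nat \<Rightarrow> nat list \<times> nat list \<Rightarrow> bool" where
  "double_1_ring l0 p \<longleftrightarrow> l0 \<ge> 4 \<and> ring_base l0 p \<and> (\<exists>n. snd p = rotate n (fst p))"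

definition double_2_ring :: "nat \<Rightarrow> nat list \<times> nat list \<Rightarrow> bool" where
  "double_2_ring l0 p \<longleftrightarrow> ring_base l0 p \<and> (\<exists>n. rev (snd p) = rotate n (fst p))"

definition cyc_prod :: "(nat \<Rightarrow> nat \<Rightarrow> 'a \<Rightarrow> real) \<Rightarrow> nat list \<Rightarrow> nat list \<Rightarrow> 'a \<Rightarrow> real" where
  "cyc_prod Y xs ks \<omega> = (\<Prod>a<length xs. Y (xs ! a) (ks ! a) \<omega> *
                                       Y (xs ! ((a + 1) mod length xs)) (ks ! a) \<omega>)"

end

theory Submission
  imports Defs
begin


definition cyc :: "nat list \<Rightarrow> int \<Rightarrow> nat" where
  "cyc w z = w ! nat (z mod int (length w))"

definition stp :: "nat list \<Rightarrow> int \<Rightarrow> nat \<times> nat" where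
  "stp w z = (if even z then (cyc w z, cyc w (z+1)) else (cyc w (z+1), cyc w z))"

definition prs :: "nat list \<Rightarrow> (nat \<times> nat) multiset" where
  "prs w = mset (map (\<lambda>q. stp w (int q)) [0..<length w])"

definition mkp :: "bool \<Rightarrow> nat \<Rightarrow> nat \<Rightarrow> nat \<times> nat" where
  "mkp b v x = (if b then (v,x) else (x,v))"

definition nbm :: "nat list \<Rightarrow> int \<Rightarrow> nat multiset" where
  "nbm w z = {#cyc w (z-1), cyc w (z+1)#}"

definition pos :: "nat list \<Rightarrow> nat \<Rightarrow> nat" where
  "pos w v = (THE t. t < length w \<and> w ! t = v)"

lemma cyc_mod[simp]: "cyc w (z mod int (length w)) = cyc w z"
  by (simp add: cyc_def)

lemma cyc_cong: "z mod int (length w) = y mod int (length w) \<Longrightarrow> cyc w z = cyc w y"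
  by (simp add: cyc_def)

lemma cyc_addL[simp]: "cyc w (z + int (length w)) = cyc w z"
  by (rule cyc_cong) simp

lemma cyc_addL'[simp]: "cyc w (z + int (length w) * k) = cyc w z"
  by (rule cyc_cong) simp

lemma cyc_nth: "t < length w \<Longrightarrow> cyc w (int t) = w ! t"
  by (simp add: cyc_def)

lemma cyc_in_set: "w \<noteq> [] \<Longrightarrow> cyc w z \<in> set w"
proof -
  assume "w \<noteq> []"
  then have "nat (z mod int (length w)) < length w"
    by (simp add: nat_less_iff)
  then show ?thesis by (simp add: cyc_def)
qed

lemma set_cyc: "w \<noteq> [] \<Longrightarrow> x \<in> set w \<Longrightarrow> \<exists>z. s \<le> z \<and> z < s + int (length w) \<and> cyc w z = x"
proof -
  assume w: "w \<noteq> []" "x \<in> set w"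
  then obtain q where q: "q < length w" "w ! q = x" by (auto simp: in_set_conv_nth)
  define z where "z = s + (int q - s) mod int (length w)"
  have "s \<le> z" "z < s + int (length w)" using w(1) by (auto simp: z_def)
  moreover have "z mod int (length w) = int q mod int (length w)"
    by (simp add: z_def mod_add_right_eq)
  then have "cyc w z = cyc w (int q)" by (rule cyc_cong)
  ultimately show ?thesis using q by (auto simp: cyc_nth)
qed

lemma even_mod_evenL: "even (L::int) \<Longrightarrow> even (z mod L) = even z"
  by (metis dvd_mod_iff even_mod_2_iff mod_mod_cancel)

lemma stp_cong:
  assumes "even z = even y" "cyc w z = cyc w y" "cyc w (z+1) = cyc w (y+1)"
  shows "stp w z = stp w y"
  using assms by (simp add: stp_def)

lemma stp_mod:
  assumes "even (length w)"
  shows "stp w (z mod int (length w)) = stp w z"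
proof (rule stp_cong)
  show "even (z mod int (length w)) = even z" using assms by (simp add: even_mod_evenL)
  show "cyc w (z mod int (length w)) = cyc w z" by simp
  show "cyc w (z mod int (length w) + 1) = cyc w (z + 1)"
    by (rule cyc_cong) (simp add: mod_add_left_eq)
qed

lemma stp_addL: "even (length w) \<Longrightarrow> stp w (z + int (length w)) = stp w z"
  by (metis mod_add_self2 stp_mod)

lemma count_mset_map_upt:
  "count (mset (map g [0..<L])) e = card {q. q < L \<and> g q = e}"
proof -
  have "count (mset (map g [0..<L])) e = card {i. i < length (map g [0..<L]) \<and> e = map g [0..<L] ! i}"
    by (simp only: count_mset count_list_eq_length_filter length_filter_conv_card)
  also have "\<dots> = card {q. q < L \<and> g q = e}" by (rule arg_cong[where f=card]) auto
  finally show ?thesis .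
qed

lemma card_shift:
  "card {q. q < L \<and> f (s + int q) = e} = card {z \<in> {s..<s + int L}. f z = e}"
proof -
  have "(\<lambda>q. s + int q) ` {q. q < L \<and> f (s + int q) = e} = {z \<in> {s..<s + int L}. f z = e}"
  proof (rule set_eqI, rule iffI)
    fix z assume "z \<in> {z \<in> {s..<s + int L}. f z = e}"
    then have "z = s + int (nat (z - s))" "nat (z - s) < L" "f (s + int (nat (z - s))) = e" by auto
    then show "z \<in> (\<lambda>q. s + int q) ` {q. q < L \<and> f (s + int q) = e}" by blast
  qed auto
  moreover have "inj_on (\<lambda>q. s + int q) {q. q < L \<and> f (s + int q) = e}"
    by (auto simp: inj_on_def)
  ultimately show ?thesis using card_image by fastforce
qed

lemma card_refl:
  "card {q. q < L \<and> f (c - 1 - int q) = e} = card {z \<in> {c - int L..<c}. f z = e}"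
proof -
  have "(\<lambda>q. c - 1 - int q) ` {q. q < L \<and> f (c - 1 - int q) = e} = {z \<in> {c - int L..<c}. f z = e}"
  proof (rule set_eqI, rule iffI)
    fix z assume "z \<in> {z \<in> {c - int L..<c}. f z = e}"
    then have "z = c - 1 - int (nat (c - 1 - z))" "nat (c - 1 - z) < L" "f (c - 1 - int (nat (c - 1 - z))) = e" by auto
    then show "z \<in> (\<lambda>q. c - 1 - int q) ` {q. q < L \<and> f (c - 1 - int q) = e}" by blast
  qed auto
  moreover have "inj_on (\<lambda>q. c - 1 - int q) {q. q < L \<and> f (c - 1 - int q) = e}"
    by (auto simp: inj_on_def)
  ultimately show ?thesis using card_image by fastforce
qed

lemma card_window:
  assumes L: "L > 0" and per: "\<And>z. f (z mod int L) = f z"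
  shows "card {z \<in> {s..<s + int L}. f z = e} = card {z \<in> {0..<int L}. f z = e}"
proof -
  have "(\<lambda>z. z mod int L) ` {z \<in> {s..<s + int L}. f z = e} = {z \<in> {0..<int L}. f z = e}"
  proof (rule set_eqI, rule iffI)
    fix y assume y: "y \<in> {z \<in> {0..<int L}. f z = e}"
    define z where "z = s + (y - s) mod int L"
    have "z mod int L = y mod int L" by (simp add: z_def mod_add_right_eq)
    also have "\<dots> = y" using y by auto
    finally have zy: "z mod int L = y" .
    have "s \<le> z" "z < s + int L" using L by (auto simp: z_def)
    moreover have "f z = e" using y per[of z] zy by auto
    ultimately show "y \<in> (\<lambda>z. z mod int L) ` {z \<in> {s..<s + int L}. f z = e}"
      using zy by (intro image_eqI[of _ _ z]) auto
  next
    fix y assume "y \<in> (\<lambda>z. z mod int L) ` {z \<in> {s..<s + int L}. f z = e}"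
    then obtain z where "y = z mod int L" "f z = e" by auto
    then show "y \<in> {z \<in> {0..<int L}. f z = e}" using L per[of z] by auto
  qed
  moreover have "inj_on (\<lambda>z. z mod int L) {z \<in> {s..<s + int L}. f z = e}"
  proof (rule inj_onI)
    fix x y assume "x \<in> {z \<in> {s..<s + int L}. f z = e}" "y \<in> {z \<in> {s..<s + int L}. f z = e}"
      "x mod int L = y mod int L"
    then have d: "int L dvd x - y" "\<bar>x - y\<bar> < int L" by (auto simp: mod_eq_dvd_iff)
    show "x = y"
    proof (rule ccontr)
      assume "x \<noteq> y"
      then have "\<bar>int L\<bar> \<le> \<bar>x - y\<bar>" using d(1) by (intro dvd_imp_le_int) auto
      then show False using d(2) by simp
    qed
  qed
  ultimately show ?thesis using card_image by fastforce
qed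

lemma count_prs_win:
  assumes "even (length w)" "w \<noteq> []"
  shows "count (prs w) e = card {z \<in> {s..<s + int (length w)}. stp w z = e}"
proof -
  have "count (prs w) e = card {z \<in> {0..<int (length w)}. stp w z = e}"
    unfolding prs_def count_mset_map_upt using card_shift[of "length w" "stp w" 0 e] by simp
  also have "\<dots> = card {z \<in> {s..<s + int (length w)}. stp w z = e}"
    by (rule card_window[symmetric]) (use assms stp_mod in auto)
  finally show ?thesis .
qed

lemma prs_win:
  assumes "even (length w)" "w \<noteq> []"
  shows "prs w = mset (map (\<lambda>q. stp w (s + int q)) [0..<length w])"
  by (rule multiset_eqI) (simp only: count_prs_win[OF assms, of _ s] count_mset_map_upt card_shift)

lemma prs_refl:
  assumes "even (length w)" "w \<noteq> []"
  shows "prs w = mset (map (\<lambda>q. stp w (c - 1 - int q)) [0..<length w])"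
  by (rule multiset_eqI) (simp only: count_prs_win[OF assms, of _ "c - int (length w)"] count_mset_map_upt card_refl diff_add_cancel)

lemma prs_set: "e \<in># prs w \<Longrightarrow> fst e \<in> set w \<and> snd e \<in> set w"
  by (auto simp: prs_def stp_def intro!: cyc_in_set split: if_splits)



lemma cyc_nat: "cyc w (int q) = w ! (q mod length w)"
proof -
  have "int q mod int (length w) = int (q mod length w)" by (simp add: of_nat_mod)
  then show ?thesis by (simp add: cyc_def)
qed

lemma count_list_card: "count_list w v = card {i. i < length w \<and> w ! i = v}"
proof -
  have "count_list w v = card {i. i < length w \<and> v = w ! i}"
    by (simp only: count_list_eq_length_filter length_filter_conv_card)
  also have "\<dots> = card {i. i < length w \<and> w ! i = v}" by (rule arg_cong[where f=card]) auto
  finally show ?thesis .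
qed

lemma count_once_unique:
  assumes "count_list w v = 1" "i < length w" "j < length w" "w ! i = v" "w ! j = v"
  shows "i = j"
proof (rule ccontr)
  assume "i \<noteq> j"
  then have "card {i, j} \<le> card {i. i < length w \<and> w ! i = v}"
    using assms by (intro card_mono) auto
  then show False using assms(1) \<open>i \<noteq> j\<close> by (simp add: count_list_card)
qed

lemma pos_spec:
  assumes "count_list w v = 1"
  shows "pos w v < length w \<and> w ! pos w v = v"
proof -
  have "v \<in> set w" using assms by (metis count_list_0_iff zero_neq_one)
  then obtain t where t: "t < length w" "w ! t = v" by (auto simp: in_set_conv_nth)
  have "\<exists>!t. t < length w \<and> w ! t = v"
    using t count_once_unique[OF assms] by blast
  then show ?thesis unfolding pos_def by (rule theI')
qed

lemma pos_unique:
  assumes "count_list w v = 1" "t < length w" "w ! t = v"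
  shows "pos w v = t"
  using pos_spec[OF assms(1)] count_once_unique[OF assms(1)] assms by blast

lemma cyc_eq_iff:
  assumes "count_list w v = 1"
  shows "cyc w z = v \<longleftrightarrow> z mod int (length w) = int (pos w v)"
proof -
  have ne: "w \<noteq> []" using assms by auto
  have lt: "nat (z mod int (length w)) < length w" using ne by (simp add: nat_less_iff)
  have "cyc w z = v \<longleftrightarrow> nat (z mod int (length w)) = pos w v"
    using pos_spec[OF assms] pos_unique[OF assms lt] lt by (auto simp: cyc_def)
  also have "\<dots> \<longleftrightarrow> z mod int (length w) = int (pos w v)"
  proof -
    have "0 \<le> z mod int (length w)" using ne by simp
    then show ?thesis by auto
  qed
  finally show ?thesis .
qed

lemma cyc_pos: "count_list w v = 1 \<Longrightarrow> cyc w (int (pos w v)) = v"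
  using pos_spec cyc_nth by metis

lemma win_eq:
  fixes a b s :: int
  assumes "s \<le> a" "a < s + L" "s \<le> b" "b < s + L" "a mod L = b mod L"
  shows "a = b"
proof (rule ccontr)
  have d: "L dvd a - b" using assms(5) by (simp add: mod_eq_dvd_iff)
  assume "a \<noteq> b"
  then have "\<bar>L\<bar> \<le> \<bar>a - b\<bar>" using d by (intro dvd_imp_le_int) auto
  then show False using assms(1-4) by simp
qed

lemma nbm_mod[simp]: "nbm w (z mod int (length w)) = nbm w z"
proof -
  have "cyc w (z mod int (length w) - 1) = cyc w (z - 1)"
    by (rule cyc_cong) (simp add: mod_diff_left_eq)
  moreover have "cyc w (z mod int (length w) + 1) = cyc w (z + 1)"
    by (rule cyc_cong) (simp add: mod_add_left_eq)
  ultimately show ?thesis by (simp add: nbm_def)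
qed

lemma nbm_addL[simp]: "nbm w (z + int (length w)) = nbm w z"
  by (metis mod_add_self2 nbm_mod)

lemma cnt_once:
  assumes ev: "even (length w)" and L2: "length w \<ge> 2" and c: "count_list w v = 1"
  shows "count (prs w) (mkp b v x) =
           (if b = even (int (pos w v)) then count (nbm w (int (pos w v))) x else 0)"
proof -
  define t where "t = int (pos w v)"
  define L where "L = int (length w)"
  have ne: "w \<noteq> []" using L2 by auto
  have L2': "L \<ge> 2" using L2 by (simp add: L_def)
  have t0: "0 \<le> t" "t < L" using pos_spec[OF c] by (auto simp: t_def L_def)
  have h1: "cyc w z = v \<longleftrightarrow> z = t" if "t - 1 \<le> z" "z < t - 1 + L" for z
  proof -
    have "cyc w z = v \<longleftrightarrow> z mod L = t mod L" using cyc_eq_iff[OF c, of z] t0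
      by (simp add: L_def t_def)
    also have "\<dots> \<longleftrightarrow> z = t" using win_eq[of "t - 1" z L t] that L2' by auto
    finally show ?thesis .
  qed
  have h2: "cyc w (z+1) = v \<longleftrightarrow> z = t - 1" if "t - 1 \<le> z" "z < t - 1 + L" for z
  proof -
    have "cyc w (z+1) = v \<longleftrightarrow> (z+1) mod L = t mod L" using cyc_eq_iff[OF c, of "z+1"] t0
      by (simp add: L_def t_def)
    also have "\<dots> \<longleftrightarrow> z + 1 = t" using win_eq[of "t" "z+1" L t] that L2' by auto
    finally show ?thesis by auto
  qed
  have cv: "cyc w t = v" using cyc_pos[OF c] by (simp add: t_def)
  have "count (prs w) (mkp b v x) = card {z \<in> {t - 1..<t - 1 + L}. stp w z = mkp b v x}"
    using count_prs_win[OF ev ne] by (simp add: L_def)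
  also have "{z \<in> {t - 1..<t - 1 + L}. stp w z = mkp b v x} =
      (if b = even t \<and> cyc w (t - 1) = x then {t - 1} else {}) \<union>
      (if b = even t \<and> cyc w (t + 1) = x then {t} else {})" (is "?S = ?T")
  proof (rule set_eqI, rule iffI)
    fix z assume z: "z \<in> ?S"
    then have zw: "t - 1 \<le> z" "z < t - 1 + L" and st: "stp w z = mkp b v x" by auto
    show "z \<in> ?T"
    proof (cases "even z")
      case True
      then show ?thesis using st h1[OF zw] h2[OF zw] cv
        by (cases b) (auto simp: stp_def mkp_def)
    next
      case False
      then show ?thesis using st h1[OF zw] h2[OF zw] cv
        by (cases b) (auto simp: stp_def mkp_def)
    qed
  next
    fix z assume z: "z \<in> ?T"
    have zw: "t - 1 \<le> z" "z < t - 1 + L" using z L2' by (auto split: if_splits)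
    show "z \<in> ?S"
      using z zw cv by (cases b) (auto simp: stp_def mkp_def split: if_splits)
  qed
  also have "card ?T = (if b = even t then count (nbm w t) x else 0)"
    by (auto simp: nbm_def)
  finally show ?thesis by (simp add: t_def)
qed

lemma cnt_once_pair:
  assumes ev: "even (length w)" and L2: "length w \<ge> 2" and c: "count_list w v = 1"
  shows "count (prs w) (v, x) = (if even (pos w v) then count (nbm w (int (pos w v))) x else 0)"
    and "count (prs w) (x, v) = (if odd (pos w v) then count (nbm w (int (pos w v))) x else 0)"
  using cnt_once[OF assms, of True x] cnt_once[OF assms, of False x]
  by (auto simp: mkp_def)

lemma nbm_sym:
  assumes ev: "even (length w)" and L2: "length w \<ge> 2"
    and cv: "count_list w v = 1" and cz: "count_list w z = 1"
    and z: "z \<in># nbm w (int (pos w v))"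
  shows "v \<in># nbm w (int (pos w z)) \<and> (even (pos w z) \<longleftrightarrow> odd (pos w v))"
proof -
  define t where "t = int (pos w v)"
  have ne: "w \<noteq> []" using L2 by auto
  have ev': "even (int (length w))" using ev by simp
  from z consider "z = cyc w (t - 1)" | "z = cyc w (t + 1)" by (auto simp: nbm_def t_def)
  then show ?thesis
  proof cases
    case 1
    then have "cyc w (t - 1) = z" by simp
    then have pz: "int (pos w z) = (t - 1) mod int (length w)" using cyc_eq_iff[OF cz, of "t - 1"] by simp
    have "nbm w (int (pos w z)) = nbm w (t - 1)" by (simp add: pz)
    moreover have "cyc w (t - 1 + 1) = v" using cyc_pos[OF cv] by (simp add: t_def)
    moreover have "even (int (pos w z)) \<longleftrightarrow> odd t" using pz even_mod_evenL[OF ev'] by simp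
    ultimately show ?thesis by (simp add: nbm_def t_def)
  next
    case 2
    then have "cyc w (t + 1) = z" by simp
    then have pz: "int (pos w z) = (t + 1) mod int (length w)" using cyc_eq_iff[OF cz, of "t + 1"] by simp
    have "nbm w (int (pos w z)) = nbm w (t + 1)" by (simp add: pz)
    moreover have "cyc w (t + 1 - 1) = v" using cyc_pos[OF cv] by (simp add: t_def)
    moreover have "even (int (pos w z)) \<longleftrightarrow> odd t" using pz even_mod_evenL[OF ev'] by simp
    ultimately show ?thesis by (simp add: nbm_def t_def)
  qed
qed



lemma bal_leaf_props:
  assumes "bal_leaf w v"
  shows "length w > 2" "count_list w v = 1"
    "cyc w (int (pos w v) - 1) = cyc w (int (pos w v) + 1)"
proof -
  from assms obtain t where t: "length w > 2" "count_list w v = 1" "t < length w" "w ! t = v"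
    "w ! ((t + length w - 1) mod length w) = w ! ((t + 1) mod length w)"
    unfolding bal_leaf_def by blast
  show "length w > 2" "count_list w v = 1" using t by auto
  have p: "pos w v = t" using pos_unique t by blast
  have e: "int (t + length w - 1) = (int t - 1) + int (length w)" using t(1) by simp
  have "cyc w (int t - 1) = cyc w (int (t + length w - 1))"
    by (simp only: e cyc_addL)
  also have "\<dots> = cyc w (int (t + 1))" using t(5) by (simp only: cyc_nat)
  finally show "cyc w (int (pos w v) - 1) = cyc w (int (pos w v) + 1)" by (simp add: p add.commute)
qed

lemma rl_unfold:
  "remove_leaf w v = (if pos w v + 1 < length w then take (pos w v) w @ drop (pos w v + 2) w
                      else take (length w - 2) w)"
  by (simp add: remove_leaf_def pos_def Let_def)

lemma rl_len: "bal_leaf w v \<Longrightarrow> length (remove_leaf w v) = length w - 2"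
  using bal_leaf_props[of w v] pos_spec[of w v] by (auto simp: rl_unfold)

lemma rl_nth:
  assumes "bal_leaf w v" "i < length w - 2"
  shows "remove_leaf w v ! i = (if pos w v + 1 < length w \<and> pos w v \<le> i then w ! (i+2) else w ! i)"
  using assms bal_leaf_props[OF assms(1)] pos_spec[of w v]
  by (auto simp: rl_unfold nth_append min_def)

lemma mod_sub: "m \<le> q \<Longrightarrow> q < 2 * m \<Longrightarrow> q mod m = q - (m::nat)"
  by (simp add: le_mod_geq)

lemma rl_cyc:
  assumes bl: "bal_leaf w v" and ev: "even (length w)"
    and q: "pos w v \<le> q" "q \<le> pos w v + length w - 3"
  shows "cyc (remove_leaf w v) (int q) = cyc w (int q + 2)"
proof -
  define L where "L = length w"
  define t where "t = pos w v"
  have L4: "L \<ge> 4" using bal_leaf_props(1)[OF bl] ev unfolding L_def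
    by presburger
  have tL: "t < L" using pos_spec bal_leaf_props(2)[OF bl] by (simp add: t_def L_def)
  have bal: "cyc w (int t - 1) = cyc w (int t + 1)" using bal_leaf_props(3)[OF bl] by (simp add: t_def)
  have lw': "length (remove_leaf w v) = L - 2" using rl_len[OF bl] by (simp add: L_def)
  have lhs: "cyc (remove_leaf w v) (int q) = remove_leaf w v ! (q mod (L - 2))"
    by (simp add: cyc_nat lw')
  have qm: "q mod (L - 2) < L - 2" using L4 by simp
  have rhs: "cyc w (int q + 2) = w ! ((q + 2) mod L)"
    using cyc_nat[of w "q+2"] by (simp add: L_def add.commute)
  have nth': "remove_leaf w v ! (q mod (L - 2)) =
     (if t + 1 < L \<and> t \<le> q mod (L - 2) then w ! (q mod (L - 2) + 2) else w ! (q mod (L - 2)))"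
    using rl_nth[OF bl, of "q mod (L - 2)"] qm by (simp add: L_def t_def)
  show ?thesis
  proof (cases "t + 1 < L")
    case True
    show ?thesis
    proof (cases "q < L - 2")
      case True
      then show ?thesis using lhs rhs nth' \<open>t + 1 < L\<close> q by (simp add: t_def)
    next
      case False
      then have m1: "q mod (L - 2) = q - (L - 2)" using q L4 tL \<open>t + 1 < L\<close> by (intro mod_sub) (auto simp: t_def L_def)
      have m2: "(q + 2) mod L = q - (L - 2)" using False q L4 tL mod_sub[of L "q+2"] by (auto simp: t_def L_def)
      have nt: "\<not> t \<le> q - (L - 2)" using q L4 False by (simp add: t_def L_def)
      have "remove_leaf w v ! (q - (L - 2)) = w ! (q - (L - 2))" using nth' nt unfolding m1 by simp
      then show ?thesis using lhs rhs m1 m2 by simp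
    qed
  next
    case False
    then have tL1: "t = L - 1" using tL by simp
    show ?thesis
    proof (cases "q < 2 * L - 4")
      case True
      then have m1: "q mod (L - 2) = q - (L - 2)" using q L4 tL1 by (intro mod_sub) (auto simp: t_def L_def)
      have m2: "(q + 2) mod L = q - (L - 2)" using True q L4 tL1 mod_sub[of L "q+2"] by (auto simp: t_def L_def)
      show ?thesis using lhs rhs nth' m1 m2 False by auto
    next
      case False
      then have qq: "q = 2 * L - 4" using q tL1 by (simp add: t_def L_def)
      then have "q = (L - 2) * 2" using L4 by simp
      then have m1: "q mod (L - 2) = 0" by simp
      have m2: "(q + 2) mod L = L - 2" using qq L4 mod_sub[of L "q+2"] by auto
      have "cyc w (int t - 1) = w ! (L - 2)"
        using cyc_nth[of "L - 2" w] tL1 L4 by (simp add: L_def of_nat_diff)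
      moreover have "cyc w (int t + 1) = w ! 0"
        using cyc_nat[of w L] tL1 L4 by (simp add: L_def of_nat_diff)
      ultimately have "w ! (L - 2) = w ! 0" using bal by simp
      then show ?thesis using lhs rhs nth' m1 m2 \<open>\<not> t + 1 < L\<close> by auto
    qed
  qed
qed



lemma stp_cong2:
  assumes "even z = even y" "cyc w z = cyc u y" "cyc w (z+1) = cyc u (y+1)"
  shows "stp w z = stp u y"
  using assms by (simp add: stp_def)

lemma rl_basic:
  assumes bl: "bal_leaf w v" and ev: "even (length w)"
  shows "length w \<ge> 4" "remove_leaf w v \<noteq> []" "even (length (remove_leaf w v))"
proof -
  have "length w > 2" using bal_leaf_props(1)[OF bl] .
  then show L4: "length w \<ge> 4" using ev by presburger
  then show "remove_leaf w v \<noteq> []" "even (length (remove_leaf w v))" using rl_len[OF bl] ev by auto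
qed

lemma rl_cyc_int:
  assumes bl: "bal_leaf w v" and ev: "even (length w)"
    and z: "int (pos w v) \<le> z" "z \<le> int (pos w v) + int (length w) - 3"
  shows "cyc (remove_leaf w v) z = cyc w (z + 2)"
proof -
  have L4: "length w \<ge> 4" using rl_basic[OF bl ev] by simp
  have "z = int (nat z)" using z by simp
  moreover have "pos w v \<le> nat z" "nat z \<le> pos w v + length w - 3" using z L4 by auto
  ultimately show ?thesis using rl_cyc[OF bl ev, of "nat z"] by metis
qed

lemma map_upt_split1: "map f [0..<Suc m] = map f [0..<m] @ [f m]"
  by simp

lemma map_upt_split3:
  "map f [0..<Suc (Suc (Suc m))] = f 0 # map (\<lambda>i. f (Suc i)) [0..<m] @ [f (Suc m), f (Suc (Suc m))]"
proof -
  have "map f [0..<Suc (Suc (Suc m))] = map f [0..<Suc m] @ [f (Suc m), f (Suc (Suc m))]" by simp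
  also have "map f [0..<Suc m] = f 0 # map (\<lambda>i. f (Suc i)) [0..<m]" by (rule map_upt_Suc)
  finally show ?thesis by simp
qed

lemma rl_prs:
  assumes bl: "bal_leaf w v" and ev: "even (length w)"
  shows "prs w = prs (remove_leaf w v) + {#stp w (int (pos w v)), stp w (int (pos w v))#}"
proof -
  define L where "L = length w"
  define t where "t = int (pos w v)"
  define w' where "w' = remove_leaf w v"
  have L4: "L \<ge> 4" using rl_basic[OF bl ev] by (simp add: L_def)
  have ne': "w' \<noteq> []" "even (length w')" using rl_basic[OF bl ev] by (auto simp: w'_def)
  have lw': "length w' = L - 2" using rl_len[OF bl] by (simp add: L_def w'_def)
  have ne: "w \<noteq> []" using L4 L_def by auto
  have bal: "cyc w (t - 1) = cyc w (t + 1)" using bal_leaf_props(3)[OF bl] by (simp add: t_def)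
  have t0: "0 \<le> t" by (simp add: t_def)
  have rc: "cyc w' z = cyc w (z + 2)" if "t \<le> z" "z \<le> t + int L - 3" for z
    using rl_cyc_int[OF bl ev] that by (simp add: w'_def t_def L_def)
  have evL: "even L" using ev by (simp add: L_def)
  define m where "m = L - 3"
  have m: "L = Suc (Suc (Suc m))" using L4 by (simp add: m_def)
  have m': "L - 2 = Suc m" using m by simp
  have s1: "stp w' (t + int q) = stp w (t + 2 + int q)" if "q < m" for q
  proof (rule stp_cong2)
    show "even (t + int q) = even (t + 2 + int q)" by simp
    show "cyc w' (t + int q) = cyc w (t + 2 + int q)" using rc[of "t + int q"] that m by (simp add: add.commute add.left_commute)
    show "cyc w' (t + int q + 1) = cyc w (t + 2 + int q + 1)" using rc[of "t + int q + 1"] that m by (simp add: add.commute add.left_commute)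
  qed
  have s2: "stp w' (t + int m) = stp w (t + 1)"
  proof (rule stp_cong2)
    have "even (int L)" using evL by simp
    then show "even (t + int m) = even (t + 1)" using m by simp
    have "cyc w' (t + int m) = cyc w (t + int m + 2)" using rc[of "t + int m"] m by simp
    also have "t + int m + 2 = (t - 1) + int L" using m by simp
    also have "cyc w \<dots> = cyc w (t - 1)" by (simp add: L_def)
    finally show "cyc w' (t + int m) = cyc w (t + 1)" using bal by simp
    have e: "t + int m + 1 = t + int (length w')" using lw' m by simp
    have "cyc w' (t + int m + 1) = cyc w' (t + int (length w'))" by (simp only: e)
    also have "\<dots> = cyc w' t" by simp
    also have "\<dots> = cyc w (t + 2)" using rc[of t] L4 by simp
    finally show "cyc w' (t + int m + 1) = cyc w (t + 1 + 1)" by (simp add: add.assoc)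
  qed
  have "prs w' = mset (map (\<lambda>q. stp w' (t + int q)) [0..<length w'])"
    by (rule prs_win[OF ne'(2) ne'(1)])
  also have "\<dots> = mset (map (\<lambda>q. stp w' (t + int q)) [0..<m]) + {#stp w' (t + int m)#}"
    unfolding lw' m' map_upt_split1 by simp
  also have "map (\<lambda>q. stp w' (t + int q)) [0..<m] = map (\<lambda>q. stp w (t + 2 + int q)) [0..<m]"
    using s1 by (intro map_cong) auto
  finally have pw': "prs w' = mset (map (\<lambda>q. stp w (t + 2 + int q)) [0..<m]) + {#stp w (t + 1)#}"
    using s2 by simp
  have "prs w = mset (map (\<lambda>q. stp w (t + 1 + int q)) [0..<L])"
    unfolding L_def by (rule prs_win[OF ev ne])
  also have "\<dots> = {#stp w (t + 1)#} + mset (map (\<lambda>q. stp w (t + 1 + int (Suc q))) [0..<m])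
       + {#stp w (t + 1 + int (Suc m)), stp w (t + 1 + int (Suc (Suc m)))#}"
    unfolding m map_upt_split3 by simp
  also have "map (\<lambda>q. stp w (t + 1 + int (Suc q))) [0..<m] = map (\<lambda>q. stp w (t + 2 + int q)) [0..<m]"
    by (intro map_cong) (auto simp: add.commute add.left_commute)
  also have "stp w (t + 1 + int (Suc m)) = stp w t"
  proof -
    have "t + 1 + int (Suc m) = (t - 1) + int (length w)" using m L_def by simp
    then have "stp w (t + 1 + int (Suc m)) = stp w (t - 1 + int (length w))" by (simp only:)
    also have "\<dots> = stp w (t - 1)" using stp_addL[OF ev] by simp
    finally have "stp w (t + 1 + int (Suc m)) = stp w (t - 1)" .
    also have "\<dots> = stp w t"
      using bal by (auto simp: stp_def)
    finally show ?thesis .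
  qed
  also have "stp w (t + 1 + int (Suc (Suc m))) = stp w t"
  proof -
    have "t + 1 + int (Suc (Suc m)) = t + int (length w)" using m L_def by simp
    then have "stp w (t + 1 + int (Suc (Suc m))) = stp w (t + int (length w))" by (simp only:)
    then show ?thesis using stp_addL[OF ev] by simp
  qed
  finally show ?thesis using pw' by (simp add: w'_def t_def)
qed

lemma stp_pos_mem:
  assumes "count_list w v = 1"
  shows "fst (stp w (int (pos w v))) = v \<or> snd (stp w (int (pos w v))) = v"
  using cyc_pos[OF assms] by (simp add: stp_def)

lemma rl_set:
  assumes bl: "bal_leaf w v" and ev: "even (length w)"
  shows "set (remove_leaf w v) = set w - {v}"
proof -
  define L where "L = length w"
  define t where "t = int (pos w v)"
  define w' where "w' = remove_leaf w v"
  have L4: "L \<ge> 4" using rl_basic[OF bl ev] by (simp add: L_def)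
  have ne': "w' \<noteq> []" using rl_basic[OF bl ev] by (auto simp: w'_def)
  have lw': "length w' = L - 2" using rl_len[OF bl] by (simp add: L_def w'_def)
  have ne: "w \<noteq> []" using L4 L_def by auto
  have c1: "count_list w v = 1" using bal_leaf_props(2)[OF bl] .
  have bal: "cyc w (t - 1) = cyc w (t + 1)" using bal_leaf_props(3)[OF bl] by (simp add: t_def)
  have t0: "0 \<le> t" "t < int L" using pos_spec[OF c1] by (auto simp: t_def L_def)
  have rc: "cyc w' z = cyc w (z + 2)" if "t \<le> z" "z \<le> t + int L - 3" for z
    using rl_cyc_int[OF bl ev] that by (simp add: w'_def t_def L_def)
  have cv: "cyc w z = v \<longleftrightarrow> z mod int L = t" for z using cyc_eq_iff[OF c1] by (simp add: L_def t_def)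
  show ?thesis
  proof (rule set_eqI, rule iffI)
    fix y assume "y \<in> set (remove_leaf w v)"
    then obtain z where z: "t \<le> z" "z < t + int (length w')" "cyc w' z = y"
      using set_cyc[OF ne', of y t] by (auto simp: w'_def)
    have zz: "t \<le> z" "z \<le> t + int L - 3" using z lw' L4 by auto
    then have y: "y = cyc w (z + 2)" using rc z by simp
    have "(z + 2) mod int L \<noteq> t"
    proof
      assume "(z + 2) mod int L = t"
      then have "(z + 2) mod int L = t mod int L" using t0 by simp
      then have "z + 2 = t + int L" using win_eq[of "t + 1" "z + 2" "int L" "t + int L"] zz L4 by simp
      then show False using zz by simp
    qed
    then have "y \<noteq> v" using y cv by simp
    moreover have "y \<in> set w" using y cyc_in_set[OF ne] by simp
    ultimately show "y \<in> set w - {v}" by simp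
  next
    fix y assume y: "y \<in> set w - {v}"
    then obtain z where z: "t + 1 \<le> z" "z < t + 1 + int L" "cyc w z = y"
      using set_cyc[OF ne, of y "t + 1"] by (auto simp: L_def)
    have "z \<noteq> t + int L" using z y cv[of z] t0 by auto
    then have zl: "z \<le> t + int L - 1" using z by simp
    show "y \<in> set (remove_leaf w v)"
    proof (cases "z = t + 1")
      case True
      have "y = cyc w (t - 1)" using z True bal by simp
      also have "\<dots> = cyc w (t - 1 + int L)" by (simp add: L_def)
      also have "t - 1 + int L = t + int L - 3 + 2" by simp
      also have "cyc w \<dots> = cyc w' (t + int L - 3)" using rc[of "t + int L - 3"] L4 by simp
      finally show ?thesis using cyc_in_set[OF ne'] by (simp add: w'_def)
    next
      case False
      then have "y = cyc w' (z - 2)" using rc[of "z - 2"] z zl by simp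
      then show ?thesis using cyc_in_set[OF ne'] by (simp add: w'_def)
    qed
  qed
qed



definition good :: "nat list \<Rightarrow> nat list \<Rightarrow> nat \<Rightarrow> bool" where
  "good s1 s2 v \<longleftrightarrow> count_list s1 v = 1 \<and> count_list s2 v = 1 \<and>
     (even (pos s1 v) = even (pos s2 v)) \<and> nbm s1 (int (pos s1 v)) = nbm s2 (int (pos s2 v))"

lemma good_sym: "good s1 s2 v = good s2 s1 v"
  unfolding good_def by auto

lemma ms2_lemma:
  fixes a1 b1 a2 b2 x :: nat
  assumes "x \<in># {#a1, b1#}" "x \<in># {#a2, b2#}"
    and "\<And>y. y \<in># {#a1, b1#} + {#a2, b2#} \<Longrightarrow> count ({#a1, b1#} + {#a2, b2#}) y \<ge> 2"
  shows "{#a1, b1#} = {#a2, b2#}"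
proof -
  obtain c1 where A: "{#a1, b1#} = {#x, c1#}" using assms(1) by (auto simp: add_mset_commute)
  obtain c2 where B: "{#a2, b2#} = {#x, c2#}" using assms(2) by (auto simp: add_mset_commute)
  have h: "\<And>y. y \<in># {#x, c1#} + {#x, c2#} \<Longrightarrow> count ({#x, c1#} + {#x, c2#}) y \<ge> 2"
    using assms(3) unfolding A B .
  have "c1 = c2"
  proof (rule ccontr)
    assume ne: "c1 \<noteq> c2"
    have "count ({#x, c1#} + {#x, c2#}) c1 \<ge> 2" using h[of c1] by simp
    then have "x = c1" using ne by (auto split: if_splits)
    have "count ({#x, c1#} + {#x, c2#}) c2 \<ge> 2" using h[of c2] by simp
    then have "x = c2" using ne by (auto split: if_splits)
    then show False using ne \<open>x = c1\<close> by simp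
  qed
  then show ?thesis using A B by simp
qed

lemma cl2:
  assumes "x \<in> set a" "x \<in> set b" "count_list a x + count_list b x = 2"
  shows "count_list a x = 1" "count_list b x = 1"
proof -
  have "count_list a x \<noteq> 0" "count_list b x \<noteq> 0" using assms(1,2) by (simp_all add: count_list_0_iff)
  then show "count_list a x = 1" "count_list b x = 1" using assms(3) by arith+
qed

locale sd =
  fixes s1 s2 :: "nat list"
  assumes ev1: "even (length s1)" and ev2: "even (length s2)"
    and l1: "length s1 \<ge> 2" and l2: "length s2 \<ge> 2"
    and P: "\<And>e. e \<in># prs s1 + prs s2 \<Longrightarrow> count (prs s1 + prs s2) e \<ge> 2"
    and c2: "\<And>v. v \<in> set s1 \<union> set s2 \<Longrightarrow> count_list s1 v + count_list s2 v = 2"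
begin

lemma swap: "sd s2 s1"
  using ev1 ev2 l1 l2 P c2 by unfold_locales (auto simp: add.commute)

lemma nb_P:
  assumes c: "count_list s1 v = 1" "count_list s2 v = 1" and r: "even (pos s1 v) = even (pos s2 v)"
    and y: "y \<in># nbm s1 (int (pos s1 v)) + nbm s2 (int (pos s2 v))"
  shows "count (nbm s1 (int (pos s1 v)) + nbm s2 (int (pos s2 v))) y \<ge> 2"
proof -
  define b where "b = even (pos s1 v)"
  have "count (prs s1) (mkp b v y) = count (nbm s1 (int (pos s1 v))) y"
    using cnt_once[OF ev1 l1 c(1), of b y] by (simp add: b_def)
  moreover have "count (prs s2) (mkp b v y) = count (nbm s2 (int (pos s2 v))) y"
    using cnt_once[OF ev2 l2 c(2), of b y] r by (simp add: b_def)
  ultimately have eq: "count (prs s1 + prs s2) (mkp b v y) = count (nbm s1 (int (pos s1 v)) + nbm s2 (int (pos s2 v))) y"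
    by simp
  then have "mkp b v y \<in># prs s1 + prs s2" using y by (metis count_greater_zero_iff)
  then show ?thesis using P eq by metis
qed

lemma G0:
  assumes c: "count_list s1 v = 1" "count_list s2 v = 1" and r: "even (pos s1 v) = even (pos s2 v)"
    and x: "x \<in># nbm s1 (int (pos s1 v))" "x \<in># nbm s2 (int (pos s2 v))"
  shows "good s1 s2 v"
proof -
  have "nbm s1 (int (pos s1 v)) = nbm s2 (int (pos s2 v))"
    using x nb_P[OF c r] unfolding nbm_def by (rule ms2_lemma)
  then show ?thesis using c r by (simp add: good_def)
qed

lemma good_step:
  assumes g: "good s1 s2 v" and z: "z \<in># nbm s1 (int (pos s1 v))"
  shows "good s1 s2 z"
proof -
  have ne1: "s1 \<noteq> []" and ne2: "s2 \<noteq> []" using l1 l2 by auto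
  have cv: "count_list s1 v = 1" "count_list s2 v = 1" using g by (auto simp: good_def)
  have z2: "z \<in># nbm s2 (int (pos s2 v))" using g z by (simp add: good_def)
  have "z \<in> set s1" using z cyc_in_set[OF ne1] by (auto simp: nbm_def)
  moreover have "z \<in> set s2" using z2 cyc_in_set[OF ne2] by (auto simp: nbm_def)
  ultimately have cz: "count_list s1 z = 1" "count_list s2 z = 1"
    using c2[of z] cl2 by auto
  have a1: "v \<in># nbm s1 (int (pos s1 z)) \<and> (even (pos s1 z) \<longleftrightarrow> odd (pos s1 v))"
    by (rule nbm_sym[OF ev1 l1 cv(1) cz(1) z])
  have a2: "v \<in># nbm s2 (int (pos s2 z)) \<and> (even (pos s2 z) \<longleftrightarrow> odd (pos s2 v))"
    by (rule nbm_sym[OF ev2 l2 cv(2) cz(2) z2])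
  have r: "even (pos s1 z) = even (pos s2 z)" using a1 a2 g by (auto simp: good_def)
  show ?thesis using G0[OF cz r] a1 a2 by blast
qed

lemma all_good:
  assumes g: "good s1 s2 r" and x: "x \<in> set s1"
  shows "good s1 s2 x"
proof -
  have ne1: "s1 \<noteq> []" using l1 by auto
  define p where "p = int (pos s1 r)"
  have k: "good s1 s2 (cyc s1 (p + int k))" for k
  proof (induction k)
    case 0
    have "count_list s1 r = 1" using g by (simp add: good_def)
    then show ?case using g cyc_pos by (simp add: p_def)
  next
    case (Suc k)
    let ?y = "cyc s1 (p + int k)"
    have cy: "count_list s1 ?y = 1" using Suc by (simp add: good_def)
    have "(p + int k) mod int (length s1) = int (pos s1 ?y)" using cyc_eq_iff[OF cy, of "p + int k"] by simp
    then have "int (pos s1 ?y) = (p + int k) mod int (length s1)" by simp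
    then have "nbm s1 (int (pos s1 ?y)) = nbm s1 (p + int k)" by simp
    then have "cyc s1 (p + int k + 1) \<in># nbm s1 (int (pos s1 ?y))" by (simp add: nbm_def)
    from good_step[OF Suc this] have "good s1 s2 (cyc s1 (p + int k + 1))" .
    moreover have "p + int k + 1 = p + int (Suc k)" by simp
    ultimately show ?case by (simp only:)
  qed
  obtain z where z: "p \<le> z" "z < p + int (length s1)" "cyc s1 z = x" using set_cyc[OF ne1 x] by blast
  have "z = p + int (nat (z - p))" using z by simp
  then show ?thesis using k[of "nat (z - p)"] z by metis
qed

end

lemma len2_conv: "length xs = 2 \<Longrightarrow> xs = [xs ! 0, xs ! 1]"
  by (cases xs; cases "tl xs") auto

context sd begin

theorem ring:
  assumes e1: "e \<in># prs s1" and e2: "e \<in># prs s2"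
  shows "double_2_ring 2 (s1, s2) \<or>
         (\<exists>l0. even l0 \<and> 4 \<le> l0 \<and> (double_1_ring l0 (s1, s2) \<or> double_2_ring l0 (s1, s2)))"
proof -
  interpret sw: sd s2 s1 by (rule swap)
  have ne1: "s1 \<noteq> []" and ne2: "s2 \<noteq> []" using l1 l2 by auto
  obtain r y where e: "e = (r, y)" by (cases e)
  have r: "r \<in> set s1" "r \<in> set s2" "y \<in> set s1" "y \<in> set s2"
    using prs_set[OF e1] prs_set[OF e2] e by auto
  have cr: "count_list s1 r = 1" "count_list s2 r = 1"
    using c2[of r] r cl2 by auto
  have "count (prs s1) (r, y) > 0" using e1 e by simp
  then have r1: "even (pos s1 r)" "y \<in># nbm s1 (int (pos s1 r))"
    using cnt_once_pair(1)[OF ev1 l1 cr(1), of y] by (auto split: if_splits)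
  have "count (prs s2) (r, y) > 0" using e2 e by simp
  then have r2: "even (pos s2 r)" "y \<in># nbm s2 (int (pos s2 r))"
    using cnt_once_pair(1)[OF ev2 l2 cr(2), of y] by (auto split: if_splits)
  have gr: "good s1 s2 r" using G0[OF cr _ r1(2) r2(2)] r1(1) r2(1) by simp
  have gr': "good s2 s1 r" using gr good_sym by metis
  have g1: "good s1 s2 x" if "x \<in> set s1" for x using all_good[OF gr that] .
  have g2: "good s1 s2 x" if "x \<in> set s2" for x using sw.all_good[OF gr' that] good_sym by metis
  have d1: "distinct s1"
    unfolding distinct_count_atmost_1 count_mset
    using g1 by (auto simp: good_def count_list_0_iff)
  have d2: "distinct s2"
    unfolding distinct_count_atmost_1 count_mset
    using g2 by (auto simp: good_def count_list_0_iff)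
  have st: "set s1 = set s2"
  proof
    show "set s1 \<subseteq> set s2"
    proof
      fix x assume "x \<in> set s1"
      then have "count_list s2 x = 1" using g1 by (simp add: good_def)
      then show "x \<in> set s2" by (metis count_list_0_iff zero_neq_one)
    qed
    show "set s2 \<subseteq> set s1"
    proof
      fix x assume "x \<in> set s2"
      then have "count_list s1 x = 1" using g2 by (simp add: good_def)
      then show "x \<in> set s1" by (metis count_list_0_iff zero_neq_one)
    qed
  qed
  define L where "L = length s1"
  have L2: "length s2 = L" using distinct_card[OF d1] distinct_card[OF d2] st by (simp add: L_def)
  define u0 where "u0 = s2 ! 0"
  have u0: "u0 \<in> set s2" using ne2 by (simp add: u0_def)
  have gu: "good s1 s2 u0" using g2[OF u0] .
  have cu: "count_list s1 u0 = 1" "count_list s2 u0 = 1" "even (pos s1 u0) = even (pos s2 u0)"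
    using gu unfolding good_def by blast+
  have p20: "pos s2 u0 = 0" using pos_unique[OF cu(2), of 0] ne2 by (simp add: u0_def)
  define t0 where "t0 = pos s1 u0"
  have t0: "t0 < L" "s1 ! t0 = u0" "even t0"
    using pos_spec[OF cu(1)] cu(3) p20 unfolding t0_def L_def by auto
  have rb: "ring_base L (s1, s2)"
    unfolding ring_base_def using ev1 L2 d1 d2 st t0 by (auto simp: L_def u0_def)
  show ?thesis
  proof (cases "L = 2")
    case True
    have a: "s1 = [s1 ! 0, s1 ! 1]" using True len2_conv L_def by metis
    have b: "s2 = [s2 ! 0, s2 ! 1]" using True len2_conv L2 by metis
    have "t0 = 0" using t0 True by presburger
    then have h0: "s2 ! 0 = s1 ! 0" using t0 by (simp add: u0_def)
    have "s2 ! 1 \<in> set s1" using st L2 True by simp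
    moreover have "s2 ! 1 \<noteq> s2 ! 0" using d2 L2 True by (simp add: nth_eq_iff_index_eq)
    moreover have "set s1 = {s1 ! 0, s1 ! 1}" by (subst a) simp
    ultimately have h1: "s2 ! 1 = s1 ! 1" using h0 by auto
    have r1: "rotate 1 s1 = [s1 ! 1, s1 ! 0]" by (subst a) simp
    have r2: "rev s2 = [s2 ! 1, s2 ! 0]" by (subst b) simp
    have "rev s2 = rotate 1 s1" using r1 r2 h0 h1 by simp
    then have "double_2_ring 2 (s1, s2)" using rb True unfolding double_2_ring_def by (metis fst_conv snd_conv)
    then show ?thesis by simp
  next
    case False
    have L4: "L \<ge> 4" using False ev1 l1 unfolding L_def by presburger
    have nbe: "nbm s1 (int (pos s1 x)) = nbm s2 (int (pos s2 x))" if "x \<in> set s1" for x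
      using g1[OF that] by (simp add: good_def)
    have c1x: "count_list s1 x = 1" "count_list s2 x = 1" if "x \<in> set s2" for x
      using g2[OF that] by (auto simp: good_def)
    have cs20: "cyc s2 0 = cyc s1 (int t0)" using t0 ne2 cyc_nth[of 0 s2] cyc_nth[of t0 s1]
      by (simp add: L_def u0_def)
    have "cyc s2 1 \<in># nbm s2 (int (pos s2 u0))" by (simp add: p20 nbm_def)
    also have "nbm s2 (int (pos s2 u0)) = nbm s1 (int t0)" using nbe[of u0] u0 st by (simp add: t0_def)
    finally have "cyc s2 1 = cyc s1 (int t0 - 1) \<or> cyc s2 1 = cyc s1 (int t0 + 1)" by (auto simp: nbm_def)
    then show ?thesis
    proof
      assume h: "cyc s2 1 = cyc s1 (int t0 + 1)"
      have k: "cyc s2 (int k) = cyc s1 (int t0 + int k) \<and> cyc s2 (int k + 1) = cyc s1 (int t0 + int k + 1)" for k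
      proof (induction k)
        case 0
        then show ?case using cs20 h by simp
      next
        case (Suc k)
        let ?x = "cyc s2 (int k + 1)"
        have x2: "?x \<in> set s2" using cyc_in_set[OF ne2] by simp
        have cx: "count_list s1 ?x = 1" "count_list s2 ?x = 1" using c1x[OF x2] by auto
        have "(int k + 1) mod int (length s2) = int (pos s2 ?x)" using cyc_eq_iff[OF cx(2), of "int k + 1"] by simp
        then have p2: "int (pos s2 ?x) = (int k + 1) mod int (length s2)" by simp
        have p1: "int (pos s1 ?x) = (int t0 + int k + 1) mod int (length s1)"
          using cyc_eq_iff[OF cx(1), of "int t0 + int k + 1"] Suc.IH by simp
        have "nbm s1 (int (pos s1 ?x)) = nbm s2 (int (pos s2 ?x))" using nbe x2 st by simp
        then have "nbm s1 (int t0 + int k + 1) = nbm s2 (int k + 1)" using p1 p2 by simp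
        then have "{#cyc s1 (int t0 + int k), cyc s1 (int t0 + int k + 2)#} = {#cyc s2 (int k), cyc s2 (int k + 2)#}"
          by (simp add: nbm_def add.assoc)
        then have "cyc s2 (int k + 2) = cyc s1 (int t0 + int k + 2)" using Suc.IH by simp
        then show ?case using Suc.IH by (simp add: ac_simps)
      qed
      have "s2 = rotate t0 s1"
      proof (rule nth_equalityI)
        show "length s2 = length (rotate t0 s1)" using L2 by (simp add: L_def)
        fix i assume "i < length s2"
        then have i: "i < L" using L2 by simp
        have "s2 ! i = cyc s2 (int i)" using cyc_nth i L2 by simp
        also have "\<dots> = cyc s1 (int (t0 + i))" using k[of i] by simp
        also have "\<dots> = s1 ! ((t0 + i) mod L)" using cyc_nat[of s1 "t0 + i"] by (simp add: L_def)
        also have "\<dots> = rotate t0 s1 ! i" using i by (simp add: nth_rotate L_def)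
        finally show "s2 ! i = rotate t0 s1 ! i" .
      qed
      then have "double_1_ring L (s1, s2)" using rb L4 by (auto simp: double_1_ring_def)
      then show ?thesis using L4 ev1 by (auto simp: L_def)
    next
      assume h: "cyc s2 1 = cyc s1 (int t0 - 1)"
      have k: "cyc s2 (int k) = cyc s1 (int t0 - int k) \<and> cyc s2 (int k + 1) = cyc s1 (int t0 - int k - 1)" for k
      proof (induction k)
        case 0
        then show ?case using cs20 h by simp
      next
        case (Suc k)
        let ?x = "cyc s2 (int k + 1)"
        have x2: "?x \<in> set s2" using cyc_in_set[OF ne2] by simp
        have cx: "count_list s1 ?x = 1" "count_list s2 ?x = 1" using c1x[OF x2] by auto
        have "(int k + 1) mod int (length s2) = int (pos s2 ?x)" using cyc_eq_iff[OF cx(2), of "int k + 1"] by simp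
        then have p2: "int (pos s2 ?x) = (int k + 1) mod int (length s2)" by simp
        have p1: "int (pos s1 ?x) = (int t0 - int k - 1) mod int (length s1)"
          using cyc_eq_iff[OF cx(1), of "int t0 - int k - 1"] Suc.IH by simp
        have "nbm s1 (int (pos s1 ?x)) = nbm s2 (int (pos s2 ?x))" using nbe x2 st by simp
        then have "nbm s1 (int t0 - int k - 1) = nbm s2 (int k + 1)" using p1 p2 by simp
        then have "{#cyc s1 (int t0 - int k), cyc s1 (int t0 - int k - 2)#} = {#cyc s2 (int k), cyc s2 (int k + 2)#}"
          by (simp add: nbm_def add_mset_commute algebra_simps)
        then have "cyc s2 (int k + 2) = cyc s1 (int t0 - int k - 2)" using Suc.IH by simp
        then show ?case using Suc.IH by (simp add: algebra_simps)
      qed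
      have "rev s2 = rotate (t0 + 1) s1"
      proof (rule nth_equalityI)
        show "length (rev s2) = length (rotate (t0 + 1) s1)" using L2 by (simp add: L_def)
        fix i assume "i < length (rev s2)"
        then have i: "i < L" using L2 by simp
        have "rev s2 ! i = s2 ! (L - Suc i)" using i L2 by (simp add: rev_nth)
        also have "\<dots> = cyc s2 (int (L - Suc i))" using cyc_nth[of "L - Suc i" s2] i L2 by simp
        also have "\<dots> = cyc s1 (int t0 - int (L - Suc i))" using k[of "L - Suc i"] by simp
        also have "int t0 - int (L - Suc i) = int (t0 + 1 + i) - int L" using i by simp
        also have "cyc s1 (int (t0 + 1 + i) - int L) = cyc s1 (int (t0 + 1 + i))"
          by (rule cyc_cong) (simp add: L_def)
        also have "\<dots> = s1 ! ((t0 + 1 + i) mod L)" using cyc_nat[of s1 "t0 + 1 + i"] by (simp add: L_def)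
        also have "\<dots> = rotate (t0 + 1) s1 ! i" using i unfolding L_def by (rule nth_rotate[symmetric])
        finally show "rev s2 ! i = rotate (t0 + 1) s1 ! i" .
      qed
      then have "double_2_ring L (s1, s2)" using rb unfolding double_2_ring_def by (metis fst_conv snd_conv)
      then show ?thesis using L4 ev1 by (auto simp: L_def)
    qed
  qed
qed

end



definition EP :: "(nat \<Rightarrow> real) \<Rightarrow> (nat \<times> nat) multiset \<Rightarrow> real" where
  "EP \<mu> F = (\<Prod>e\<in>set_mset F. \<mu> (count F e))"

definition Phi :: "(nat \<Rightarrow> real) \<Rightarrow> (nat \<times> nat) multiset \<Rightarrow> (nat \<times> nat) multiset \<Rightarrow> real" where
  "Phi \<mu> F G = EP \<mu> (F + G) - EP \<mu> F * EP \<mu> G"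

definition Inv :: "nat list \<times> nat list \<Rightarrow> bool" where
  "Inv p \<longleftrightarrow> even (length (fst p)) \<and> even (length (snd p)) \<and> 2 \<le> length (fst p) \<and> 2 \<le> length (snd p)
     \<and> 2 * card (set (fst p) \<union> set (snd p)) = length (fst p) + length (snd p)"

definition RR :: "(nat \<Rightarrow> real) \<Rightarrow> nat list \<times> nat list \<Rightarrow> real" where
  "RR \<mu> p = (if double_2_ring 2 p then \<mu> 4 - 1
            else if \<exists>l0. even l0 \<and> l0 \<ge> 4 \<and> double_1_ring l0 p then 1
            else if \<exists>l0. even l0 \<and> l0 \<ge> 4 \<and> double_2_ring l0 p then 1
            else 0)"

lemma EP_disj:
  assumes "set_mset F \<inter> set_mset G = {}"
  shows "EP \<mu> (F + G) = EP \<mu> F * EP \<mu> G"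
proof -
  have "EP \<mu> (F + G) = (\<Prod>e\<in>set_mset F \<union> set_mset G. \<mu> (count (F + G) e))"
    by (simp add: EP_def)
  also have "\<dots> = (\<Prod>e\<in>set_mset F. \<mu> (count (F + G) e)) * (\<Prod>e\<in>set_mset G. \<mu> (count (F + G) e))"
    using assms by (intro prod.union_disjoint) auto
  also have "(\<Prod>e\<in>set_mset F. \<mu> (count (F + G) e)) = EP \<mu> F"
    unfolding EP_def
  proof (intro prod.cong refl)
    fix e assume "e \<in> set_mset F"
    then have "e \<notin># G" using assms by blast
    then show "\<mu> (count (F + G) e) = \<mu> (count F e)" by (simp add: not_in_iff)
  qed
  also have "(\<Prod>e\<in>set_mset G. \<mu> (count (F + G) e)) = EP \<mu> G"
    unfolding EP_def
  proof (intro prod.cong refl)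
    fix e assume "e \<in> set_mset G"
    then have "e \<notin># F" using assms by blast
    then show "\<mu> (count (F + G) e) = \<mu> (count G e)" by (simp add: not_in_iff)
  qed
  finally show ?thesis .
qed

lemma EP_zero:
  assumes "\<mu> 1 = 0" "e \<in># F" "count F e = 1"
  shows "EP \<mu> F = 0"
  unfolding EP_def using assms by (intro prod_zero) (auto intro!: bexI[of _ e])

lemma EP_add2:
  assumes "e \<notin># F"
  shows "EP \<mu> (F + {#e, e#}) = \<mu> 2 * EP \<mu> F"
proof -
  have "set_mset (F + {#e, e#}) = insert e (set_mset F)" by auto
  then have "EP \<mu> (F + {#e, e#}) = \<mu> (count (F + {#e, e#}) e) * (\<Prod>x\<in>set_mset F. \<mu> (count (F + {#e, e#}) x))"
    using assms by (simp add: EP_def prod.insert)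
  also have "(\<Prod>x\<in>set_mset F. \<mu> (count (F + {#e, e#}) x)) = EP \<mu> F"
    unfolding EP_def using assms by (intro prod.cong) auto
  also have "count (F + {#e, e#}) e = 2" using assms by (simp add: not_in_iff)
  finally show ?thesis by simp
qed

lemma EP_const:
  assumes "\<And>e. e \<in># F \<Longrightarrow> count F e = c"
  shows "EP \<mu> F = \<mu> c ^ card (set_mset F)"
  unfolding EP_def using assms by simp

lemma Phi_leaf1:
  assumes "e \<notin># F" "e \<notin># G" "\<mu> 2 = 1"
  shows "Phi \<mu> (F + {#e, e#}) G = Phi \<mu> F G"
proof -
  have eq: "F + {#e, e#} + G = (F + G) + {#e, e#}" by (simp add: ac_simps)
  have "e \<notin># F + G" using assms by simp
  then have a: "EP \<mu> (F + G + {#e, e#}) = \<mu> 2 * EP \<mu> (F + G)" by (rule EP_add2)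
  have b: "EP \<mu> (F + {#e, e#}) = \<mu> 2 * EP \<mu> F" using assms(1) by (rule EP_add2)
  show ?thesis unfolding Phi_def eq a b using assms(3) by simp
qed

lemma Phi_sym: "Phi \<mu> F G = Phi \<mu> G F"
  by (simp add: Phi_def ac_simps)

lemma Phi_same_ones:
  assumes "\<mu> 1 = 0" "\<mu> 2 = 1" "F \<noteq> {#}" "\<And>e. e \<in># F \<Longrightarrow> count F e = 1"
  shows "Phi \<mu> F F = 1"
proof -
  have "EP \<mu> (F + F) = \<mu> 2 ^ card (set_mset (F + F))"
    using assms(4) by (intro EP_const) (auto simp: mult_2[symmetric])
  moreover have "EP \<mu> F = \<mu> 1 ^ card (set_mset F)" using assms(4) by (intro EP_const) auto
  moreover have "card (set_mset F) > 0" using assms(3) by (simp add: card_gt_0_iff)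
  ultimately show ?thesis using assms(1,2) by (simp add: Phi_def)
qed

lemma prs2: "prs [a, b] = {#(a, b), (a, b)#}"
  by (simp add: prs_def stp_def cyc_def upt_rec)

lemma Phi_D22:
  assumes "\<mu> 2 = 1"
  shows "Phi \<mu> {#(a, b), (a, b)#} {#(a, b), (a, b)#} = \<mu> 4 - 1"
  using assms by (simp add: Phi_def EP_def numeral_eq_Suc)



lemma cyc_rotate:
  assumes ne: "w \<noteq> []"
  shows "cyc (rotate n w) z = cyc w (z + int n)"
proof -
  define L where "L = length w"
  have L0: "L > 0" using ne by (simp add: L_def)
  define q where "q = nat (z mod int L)"
  have q: "q < L" "int q = z mod int L" using L0 by (auto simp: q_def nat_less_iff)
  have "cyc (rotate n w) z = rotate n w ! q" by (simp add: cyc_def q_def L_def)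
  also have "\<dots> = w ! ((n + q) mod L)" using q by (simp add: nth_rotate L_def)
  also have "\<dots> = cyc w (int (n + q))" using cyc_nat[of w "n + q"] by (simp add: L_def)
  also have "\<dots> = cyc w (z + int n)"
    by (rule cyc_cong) (simp add: q(2) L_def mod_add_right_eq add.commute)
  finally show ?thesis .
qed

lemma cyc_rev:
  assumes ne: "w \<noteq> []"
  shows "cyc (rev w) z = cyc w (- 1 - z)"
proof -
  define L where "L = length w"
  have L0: "L > 0" using ne by (simp add: L_def)
  define q where "q = nat (z mod int L)"
  have q: "q < L" "int q = z mod int L" using L0 by (auto simp: q_def nat_less_iff)
  have "cyc (rev w) z = rev w ! q" by (simp add: cyc_def q_def L_def)
  also have "\<dots> = w ! (L - Suc q)" using q by (simp add: rev_nth L_def)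
  also have "\<dots> = cyc w (int (L - Suc q))" using q cyc_nth[of "L - Suc q" w] by (simp add: L_def)
  also have "\<dots> = cyc w (- 1 - z)"
  proof (rule cyc_cong)
    have "int (L - Suc q) = - 1 - int q + int L" using q by simp
    then show "int (L - Suc q) mod int (length w) = (- 1 - z) mod int (length w)"
      by (simp add: q(2) L_def mod_diff_right_eq)
  qed
  finally show ?thesis .
qed

lemma prs_rotate:
  assumes ev: "even (length w)" and ne: "w \<noteq> []" and en: "even n"
  shows "prs (rotate n w) = prs w"
proof -
  have st: "stp (rotate n w) z = stp w (int n + z)" for z
    using en by (simp add: stp_def cyc_rotate[OF ne] ac_simps)
  have "prs (rotate n w) = mset (map (\<lambda>q. stp (rotate n w) (int q)) [0..<length w])"
    by (simp add: prs_def)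
  also have "\<dots> = mset (map (\<lambda>q. stp w (int n + int q)) [0..<length w])"
    by (simp add: st)
  also have "\<dots> = prs w" by (rule prs_win[OF ev ne, symmetric])
  finally show ?thesis .
qed

lemma prs_rev_rotate:
  assumes ev: "even (length w)" and ne: "w \<noteq> []" and en: "odd n"
  shows "prs (rev (rotate n w)) = prs w"
proof -
  define c where "c = int n - 1"
  have ec: "even c" using en by (simp add: c_def)
  have ne': "rotate n w \<noteq> []" using ne by simp
  have cz: "cyc (rev (rotate n w)) z = cyc w (c - z)" for z
  proof -
    have e1: "cyc (rev (rotate n w)) z = cyc (rotate n w) (- 1 - z)" by (rule cyc_rev[OF ne'])
    have e2: "cyc (rotate n w) (- 1 - z) = cyc w (- 1 - z + int n)" by (rule cyc_rotate[OF ne])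
    have e3: "- 1 - z + int n = c - z" by (simp add: c_def)
    show ?thesis by (simp only: e1 e2 e3)
  qed
  have st: "stp (rev (rotate n w)) z = stp w (c - 1 - int q)" if "z = int q" for z q
  proof -
    have a: "cyc w (c - (int q + 1)) = cyc w (c - 1 - int q)" by (simp add: algebra_simps)
    have b: "cyc w (c - 1 - int q + 1) = cyc w (c - int q)" by (simp add: algebra_simps)
    have p: "even (c - 1 - int q) = (\<not> even (int q))" using ec by simp
    have X: "stp (rev (rotate n w)) (int q) = (if even (int q) then (cyc w (c - int q), cyc w (c - 1 - int q))
          else (cyc w (c - 1 - int q), cyc w (c - int q)))"
      by (simp only: stp_def cz a)
    have Y: "stp w (c - 1 - int q) = (if \<not> even (int q) then (cyc w (c - 1 - int q), cyc w (c - int q))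
          else (cyc w (c - int q), cyc w (c - 1 - int q)))"
      by (simp only: stp_def b p)
    show ?thesis using X Y that by simp
  qed
  have "prs (rev (rotate n w)) = mset (map (\<lambda>q. stp (rev (rotate n w)) (int q)) [0..<length w])"
    by (simp add: prs_def)
  also have "\<dots> = mset (map (\<lambda>q. stp w (c - 1 - int q)) [0..<length w])"
    using st by simp
  also have "\<dots> = prs w" by (rule prs_refl[OF ev ne, symmetric])
  finally show ?thesis .
qed

lemma distinct_counts1:
  assumes d: "distinct w" and L3: "length w \<ge> 3" and ev: "even (length w)"
    and e: "e \<in># prs w"
  shows "count (prs w) e = 1"
proof -
  obtain r y where ery: "e = (r, y)" by (cases e)
  have ne: "w \<noteq> []" using L3 by auto
  have r: "r \<in> set w" using prs_set[OF e] ery by simp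
  have cr: "count_list w r = 1" using d r by (metis count_mset distinct_count_atmost_1)
  define t where "t = int (pos w r)"
  have "cyc w (t - 1) \<noteq> cyc w (t + 1)"
  proof
    assume h: "cyc w (t - 1) = cyc w (t + 1)"
    define u where "u = cyc w (t + 1)"
    have u: "u \<in> set w" using cyc_in_set[OF ne] by (simp add: u_def)
    have cu: "count_list w u = 1" using d u by (metis count_mset distinct_count_atmost_1)
    have "(t - 1) mod int (length w) = int (pos w u)" using cyc_eq_iff[OF cu, of "t - 1"] h by (simp add: u_def)
    moreover have "(t + 1) mod int (length w) = int (pos w u)" using cyc_eq_iff[OF cu, of "t + 1"] by (simp add: u_def)
    ultimately have "(t + 1) mod int (length w) = (t - 1) mod int (length w)" by simp
    then have "int (length w) dvd (t + 1) - (t - 1)" using mod_eq_dvd_iff by blast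
    then have "int (length w) dvd 2" by simp
    then have "int (length w) \<le> 2" by (rule zdvd_imp_le) simp
    then show False using L3 by simp
  qed
  then have "count (nbm w t) y \<le> 1" by (auto simp: nbm_def)
  moreover have "count (prs w) (r, y) \<le> count (nbm w t) y"
    using cnt_once_pair(1)[OF ev _ cr, of y] L3 by (simp add: t_def)
  moreover have "0 < count (prs w) (r, y)" using e ery by simp
  ultimately have "count (prs w) (r, y) = 1" by linarith
  then show ?thesis using ery by simp
qed

lemma ring_rot_even:
  assumes rb: "ring_base l0 (s1, s2)" and l0: "l0 \<ge> 2" and s2: "s2 ! 0 = s1 ! (n mod l0)"
  shows "even n"
proof -
  obtain t where t: "t < l0" "s1 ! t = s2 ! 0" "even t" and d: "distinct s1" and len: "length s1 = l0" "even l0"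
    using rb unfolding ring_base_def by auto
  have "n mod l0 < l0" using l0 by simp
  then have "t = n mod l0" using d t s2 len by (simp add: nth_eq_iff_index_eq)
  then show ?thesis using t(3) len(2) by (metis dvd_mod_iff even_mod_2_iff)
qed

lemma Phi_D1:
  assumes m: "\<mu> 1 = 0" "\<mu> 2 = 1" and r: "double_1_ring l0 (s1, s2)"
  shows "Phi \<mu> (prs s1) (prs s2) = 1"
proof -
  obtain n where l0: "l0 \<ge> 4" and rb: "ring_base l0 (s1, s2)" and n: "s2 = rotate n s1"
    using r unfolding double_1_ring_def by auto
  have len: "length s1 = l0" "even l0" "distinct s1" using rb by (auto simp: ring_base_def)
  have ne: "s1 \<noteq> []" using len l0 by auto
  have "s2 ! 0 = s1 ! (n mod l0)" using n ne len nth_rotate[of 0 s1 n] l0 by simp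
  then have en: "even n" using ring_rot_even[OF rb] l0 by simp
  have p: "prs s2 = prs s1" using n prs_rotate[OF _ ne en] len by simp
  have "size (prs s1) = length s1" by (simp add: prs_def)
  then have "prs s1 \<noteq> {#}" using ne by auto
  moreover have "\<And>e. e \<in># prs s1 \<Longrightarrow> count (prs s1) e = 1"
    using distinct_counts1 len l0 by simp
  ultimately show ?thesis using Phi_same_ones[OF m] p by simp
qed

lemma Phi_D2:
  assumes m: "\<mu> 1 = 0" "\<mu> 2 = 1" and r: "double_2_ring l0 (s1, s2)" and l0: "l0 \<ge> 4"
  shows "Phi \<mu> (prs s1) (prs s2) = 1"
proof -
  obtain n where rb: "ring_base l0 (s1, s2)" and n: "rev s2 = rotate n s1"
    using r unfolding double_2_ring_def by auto
  have len: "length s1 = l0" "even l0" "distinct s1" using rb by (auto simp: ring_base_def)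
  have ne: "s1 \<noteq> []" using len l0 by auto
  have s2: "s2 = rev (rotate n s1)" using n by (metis rev_rev_ident)
  have "s2 ! 0 = rotate n s1 ! (l0 - 1)" using s2 len l0 by (simp add: rev_nth)
  also have "\<dots> = s1 ! ((n + (l0 - 1)) mod l0)" using len l0 by (simp add: nth_rotate)
  finally have s20: "s2 ! 0 = s1 ! ((n + (l0 - 1)) mod l0)" .
  have "even (n + (l0 - 1))" using ring_rot_even[OF rb _ s20] l0 by simp
  then have en: "odd n" using len(2) l0 by presburger
  have p: "prs s2 = prs s1" using s2 prs_rev_rotate[OF _ ne en] len by simp
  have "size (prs s1) = length s1" by (simp add: prs_def)
  then have "prs s1 \<noteq> {#}" using ne by auto
  moreover have "\<And>e. e \<in># prs s1 \<Longrightarrow> count (prs s1) e = 1"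
    using distinct_counts1 len l0 by simp
  ultimately show ?thesis using Phi_same_ones[OF m] p by simp
qed

lemma Phi_D22':
  assumes m: "\<mu> 2 = 1" and r: "double_2_ring 2 (s1, s2)"
  shows "Phi \<mu> (prs s1) (prs s2) = \<mu> 4 - 1"
proof -
  have rb: "ring_base 2 (s1, s2)" using r by (simp add: double_2_ring_def)
  then obtain t where t: "t < 2" "s1 ! t = s2 ! 0" "even t" and d: "distinct s1" "distinct s2"
    and len: "length s1 = 2" "length s2 = 2" and st: "set s1 = set s2"
    unfolding ring_base_def by auto
  have a: "s1 = [s1 ! 0, s1 ! 1]" using len len2_conv by metis
  have b: "s2 = [s2 ! 0, s2 ! 1]" using len len2_conv by metis
  have "t = 0" using t by presburger
  then have h0: "s2 ! 0 = s1 ! 0" using t by simp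
  have "s2 ! 1 \<in> set s1" using st len by simp
  moreover have "s2 ! 1 \<noteq> s2 ! 0" using d len by (simp add: nth_eq_iff_index_eq)
  moreover have "set s1 = {s1 ! 0, s1 ! 1}" by (subst a) simp
  ultimately have h1: "s2 ! 1 = s1 ! 1" using h0 by auto
  have "prs s1 = {#(s1 ! 0, s1 ! 1), (s1 ! 0, s1 ! 1)#}" by (subst a) (rule prs2)
  moreover have "prs s2 = {#(s1 ! 0, s1 ! 1), (s1 ! 0, s1 ! 1)#}" using h0 h1 by (subst b) (simp add: prs2)
  ultimately show ?thesis using Phi_D22[where \<mu>=\<mu>, OF m] by simp
qed



declare seed.simps[simp del]

lemma Inv_swap: "Inv (a, b) = Inv (b, a)"
  unfolding Inv_def by (auto simp: Un_commute add.commute)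

lemma leaf_step1:
  assumes I: "Inv (s1, s2)" and bl: "bal_leaf s1 v" and v2: "v \<notin> set s2" and m2: "\<mu> 2 = 1"
  shows "Inv (remove_leaf s1 v, s2) \<and> Phi \<mu> (prs s1) (prs s2) = Phi \<mu> (prs (remove_leaf s1 v)) (prs s2)"
proof
  have ev: "even (length s1)" using I by (simp add: Inv_def)
  have c1: "count_list s1 v = 1" using bal_leaf_props(2)[OF bl] .
  define e where "e = stp s1 (int (pos s1 v))"
  have pe: "prs s1 = prs (remove_leaf s1 v) + {#e, e#}" using rl_prs[OF bl ev] by (simp add: e_def)
  have ve: "fst e = v \<or> snd e = v" using stp_pos_mem[OF c1] by (simp add: e_def)
  have st: "set (remove_leaf s1 v) = set s1 - {v}" using rl_set[OF bl ev] .
  have n1: "e \<notin># prs (remove_leaf s1 v)"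
  proof
    assume "e \<in># prs (remove_leaf s1 v)"
    then have "fst e \<in> set (remove_leaf s1 v) \<and> snd e \<in> set (remove_leaf s1 v)" by (rule prs_set)
    then show False using ve st by auto
  qed
  have n2: "e \<notin># prs s2"
  proof
    assume "e \<in># prs s2"
    then have "fst e \<in> set s2 \<and> snd e \<in> set s2" by (rule prs_set)
    then show False using ve v2 by auto
  qed
  show "Phi \<mu> (prs s1) (prs s2) = Phi \<mu> (prs (remove_leaf s1 v)) (prs s2)"
    unfolding pe using Phi_leaf1[where \<mu>=\<mu>, OF n1 n2 m2] .
  have L4: "length s1 \<ge> 4" using rl_basic[OF bl ev] by simp
  have len: "length (remove_leaf s1 v) = length s1 - 2" using rl_len[OF bl] .
  have vs: "v \<in> set s1" using c1 by (metis count_list_0_iff zero_neq_one)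
  have un: "set (remove_leaf s1 v) \<union> set s2 = (set s1 \<union> set s2) - {v}" using st v2 by auto
  have "card (set (remove_leaf s1 v) \<union> set s2) = card (set s1 \<union> set s2) - 1"
    unfolding un using vs by (simp add: card_Diff_singleton)
  moreover have "card (set s1 \<union> set s2) \<ge> 1"
  proof -
    have "set s1 \<union> set s2 \<noteq> {}" using vs by auto
    then have "card (set s1 \<union> set s2) > 0" by (simp add: card_gt_0_iff)
    then show ?thesis by simp
  qed
  ultimately show "Inv (remove_leaf s1 v, s2)" using I L4 len ev unfolding Inv_def by auto
qed

lemma leaf_step2:
  assumes I: "Inv (s1, s2)" and bl: "bal_leaf s2 v" and v1: "v \<notin> set s1" and m2: "\<mu> 2 = 1"
  shows "Inv (s1, remove_leaf s2 v) \<and> Phi \<mu> (prs s1) (prs s2) = Phi \<mu> (prs s1) (prs (remove_leaf s2 v))"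
  using leaf_step1[of s2 s1 v \<mu>] assms Inv_swap Phi_sym by metis

lemma leaf_exists:
  assumes ev: "even (length w)" and L2: "length w \<ge> 2" and c: "count_list w v = 1" and vo: "v \<notin> set u"
    and P: "\<And>e. e \<in># prs w + prs u \<Longrightarrow> count (prs w + prs u) e \<ge> 2"
    and s1: "e0 \<in># prs w" and s2: "e0 \<in># prs u"
  shows "bal_leaf w v"
proof (cases "length w = 2")
  case True
  have a: "w = [w ! 0, w ! 1]" using True len2_conv by metis
  have "prs w = {#(w ! 0, w ! 1), (w ! 0, w ! 1)#}" by (subst a) (rule prs2)
  then have "e0 = (w ! 0, w ! 1)" using s1 by auto
  then have "w ! 0 \<in> set u" "w ! 1 \<in> set u" using prs_set[OF s2] by auto
  moreover have "v \<in> set w" using c by (metis count_list_0_iff zero_neq_one)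
  moreover have "set w = {w ! 0, w ! 1}" by (subst a) simp
  ultimately show ?thesis using vo by auto
next
  case False
  then have L3: "length w > 2" using L2 by simp
  define t where "t = int (pos w v)"
  define x where "x = cyc w (t + 1)"
  define b where "b = even (pos w v)"
  have cw: "count (prs w) (mkp b v x) = count (nbm w t) x"
    using cnt_once[OF ev L2 c, of b x] by (simp add: b_def t_def)
  have co: "count (prs u) (mkp b v x) = 0"
  proof (rule ccontr)
    assume "count (prs u) (mkp b v x) \<noteq> 0"
    then have "mkp b v x \<in># prs u" by (simp add: count_eq_zero_iff)
    then have "v \<in> set u" using prs_set by (force simp: mkp_def split: if_splits)
    then show False using vo by simp
  qed
  have "count (nbm w t) x \<ge> 1" by (simp add: nbm_def x_def)
  then have "mkp b v x \<in># prs w + prs u" using cw by (simp add: count_greater_zero_iff[symmetric] del: count_greater_zero_iff)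
  then have "count (prs w + prs u) (mkp b v x) \<ge> 2" by (rule P)
  then have "count (nbm w t) x \<ge> 2" using cw co by simp
  then have eq: "cyc w (t - 1) = cyc w (t + 1)" by (auto simp: nbm_def x_def split: if_splits)
  define p where "p = pos w v"
  have p: "p < length w" "w ! p = v" using pos_spec[OF c] by (auto simp: p_def)
  have "w ! ((p + length w - 1) mod length w) = cyc w (int (p + length w - 1))" by (simp only: cyc_nat)
  also have "int (p + length w - 1) = (t - 1) + int (length w)" using L3 by (simp add: t_def p_def)
  also have "cyc w \<dots> = cyc w (t - 1)" by simp
  also have "\<dots> = cyc w (int (p + 1))" using eq by (simp add: t_def p_def ac_simps)
  also have "\<dots> = w ! ((p + 1) mod length w)" by (simp only: cyc_nat)
  finally show ?thesis unfolding bal_leaf_def using L3 c p by blast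
qed

lemma sum_eq2:
  fixes f :: "nat \<Rightarrow> nat"
  assumes fin: "finite U" and ge: "\<And>v. v \<in> U \<Longrightarrow> f v \<ge> 2" and s: "sum f U = 2 * card U"
  shows "\<And>v. v \<in> U \<Longrightarrow> f v = 2"
proof (rule ccontr)
  fix v assume v: "v \<in> U" and ne: "f v \<noteq> 2"
  then have "f v \<ge> 3" using ge[OF v] by simp
  moreover have "sum (\<lambda>_. 2) (U - {v}) \<le> sum f (U - {v})"
    using ge by (intro sum_mono) auto
  moreover have "sum f U = f v + sum f (U - {v})" using fin v by (simp add: sum.remove)
  moreover have "card (U - {v}) = card U - 1" using fin v by simp
  moreover have "card U \<ge> 1" using fin v by (simp add: Suc_le_eq card_gt_0_iff) blast
  ultimately show False using s by simp
qed

lemma noleaf: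
  assumes I: "Inv (s1, s2)" and nl: "\<not> (\<exists>v. pair_leaf (s1, s2) v)"
    and m1: "\<mu> 1 = 0" and m2: "\<mu> 2 = 1"
  shows "Phi \<mu> (prs s1) (prs s2) = RR \<mu> (s1, s2)"
proof -
  have ev1: "even (length s1)" and ev2: "even (length s2)" and l1: "length s1 \<ge> 2" and l2: "length s2 \<ge> 2"
    and cd: "2 * card (set s1 \<union> set s2) = length s1 + length s2" using I by (auto simp: Inv_def)
  show ?thesis
  proof (cases "double_2_ring 2 (s1, s2)")
    case True
    then show ?thesis using Phi_D22'[where \<mu>=\<mu>, OF m2 True] by (simp add: RR_def)
  next
    case nD22: False
    show ?thesis
    proof (cases "\<exists>l0. even l0 \<and> l0 \<ge> 4 \<and> double_1_ring l0 (s1, s2)")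
      case True
      then obtain l0 where "double_1_ring l0 (s1, s2)" by blast
      then show ?thesis using Phi_D1[OF m1 m2] True nD22 by (simp add: RR_def)
    next
      case nD1: False
      show ?thesis
      proof (cases "\<exists>l0. even l0 \<and> l0 \<ge> 4 \<and> double_2_ring l0 (s1, s2)")
        case True
        then obtain l0 where "double_2_ring l0 (s1, s2)" "l0 \<ge> 4" by blast
        then show ?thesis using Phi_D2[OF m1 m2] True nD22 nD1 by (simp add: RR_def)
      next
        case nD2: False
        have RR0: "RR \<mu> (s1, s2) = 0" using nD22 nD1 nD2 by (simp add: RR_def)
        show ?thesis
        proof (cases "\<exists>e. e \<in># prs s1 \<and> e \<in># prs s2")
          case False
          then have "set_mset (prs s1) \<inter> set_mset (prs s2) = {}" by auto
          then show ?thesis using RR0 EP_disj by (simp add: Phi_def)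
        next
          case shared: True
          then obtain e0 where e0: "e0 \<in># prs s1" "e0 \<in># prs s2" by blast
          show ?thesis
          proof (cases "\<exists>e. e \<in># prs s1 + prs s2 \<and> count (prs s1 + prs s2) e < 2")
            case True
            then obtain e where e: "e \<in># prs s1 + prs s2" "count (prs s1 + prs s2) e < 2" by blast
            have c0: "0 < count (prs s1 + prs s2) e" using e(1) by (simp only: count_greater_zero_iff)
            have c1: "count (prs s1 + prs s2) e = 1" using c0 e(2) by linarith
            have z1: "EP \<mu> (prs s1 + prs s2) = 0" using EP_zero[where \<mu>=\<mu>, OF m1 e(1) c1] .
            have "count (prs s1) e = 1 \<or> count (prs s2) e = 1" using c1 by simp arith
            then have "EP \<mu> (prs s1) = 0 \<or> EP \<mu> (prs s2) = 0"
              using EP_zero[where \<mu>=\<mu>, OF m1, of e "prs s1"] EP_zero[where \<mu>=\<mu>, OF m1, of e "prs s2"]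
              by (auto simp: count_greater_zero_iff[symmetric] simp del: count_greater_zero_iff)
            then show ?thesis using z1 RR0 by (auto simp: Phi_def)
          next
            case False
            then have P: "\<And>e. e \<in># prs s1 + prs s2 \<Longrightarrow> count (prs s1 + prs s2) e \<ge> 2" by force
            have P': "\<And>e. e \<in># prs s2 + prs s1 \<Longrightarrow> count (prs s2 + prs s1) e \<ge> 2"
              using P by (simp add: add.commute)
            define U where "U = set s1 \<union> set s2"
            have ge: "count_list s1 v + count_list s2 v \<ge> 2" if v: "v \<in> U" for v
            proof (rule ccontr)
              assume lt: "\<not> ?thesis"
              have n1: "v \<in> set s1 \<Longrightarrow> count_list s1 v \<noteq> 0" and n2: "v \<in> set s2 \<Longrightarrow> count_list s2 v \<noteq> 0"
                by (simp_all add: count_list_0_iff)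
              have "(count_list s1 v = 1 \<and> count_list s2 v = 0) \<or> (count_list s1 v = 0 \<and> count_list s2 v = 1)"
              proof (cases "v \<in> set s1")
                case True
                then show ?thesis using n1 lt by linarith
              next
                case False
                then have "v \<in> set s2" using v by (simp add: U_def)
                then show ?thesis using n2 lt by linarith
              qed
              then consider "count_list s1 v = 1" "count_list s2 v = 0" | "count_list s1 v = 0" "count_list s2 v = 1"
                by (elim disjE conjE) simp_all
              then show False
              proof cases
                case 1
                then have "v \<notin> set s2" by (simp add: count_list_0_iff)
                then have "bal_leaf s1 v" using leaf_exists[OF ev1 l1 1(1) _ P e0] by simp
                then have "pair_leaf (s1, s2) v" using \<open>v \<notin> set s2\<close> by (simp add: pair_leaf_def)
                then show False using nl by blast
              next
                case 2
                then have "v \<notin> set s1" by (simp add: count_list_0_iff)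
                then have "bal_leaf s2 v" using leaf_exists[OF ev2 l2 2(2) _ P' e0(2) e0(1)] by simp
                then have "pair_leaf (s1, s2) v" using \<open>v \<notin> set s1\<close> by (simp add: pair_leaf_def)
                then show False using nl by blast
              qed
            qed
            have fin: "finite U" by (simp add: U_def)
            have "sum (\<lambda>v. count_list s1 v + count_list s2 v) U = length s1 + length s2"
              by (simp add: sum.distrib sum_count_set U_def)
            then have sm: "sum (\<lambda>v. count_list s1 v + count_list s2 v) U = 2 * card U" using cd by (simp add: U_def)
            have c2: "count_list s1 v + count_list s2 v = 2" if "v \<in> U" for v
              using sum_eq2[where f="\<lambda>v. count_list s1 v + count_list s2 v", OF fin ge sm that] by simp
            interpret sd s1 s2
              using ev1 ev2 l1 l2 P c2 by unfold_locales (auto simp: U_def)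
            from ring[OF e0] have False using nD22 nD1 nD2 by blast
            then show ?thesis ..
          qed
        qed
      qed
    qed
  qed
qed

lemma seed_main:
  assumes m1: "\<mu> 1 = 0" and m2: "\<mu> 2 = 1"
  shows "Inv p \<Longrightarrow> Phi \<mu> (prs (fst p)) (prs (snd p)) = RR \<mu> (seed p)"
proof (induction p rule: seed.induct)
  case (1 p)
  obtain s1 s2 where p: "p = (s1, s2)" by (cases p)
  show ?case
  proof (cases "\<exists>v. pair_leaf p v")
    case ex: True
    define v where "v = Least (pair_leaf p)"
    have pl: "pair_leaf p v" using ex unfolding v_def by (metis LeastI)
    show ?thesis
    proof (cases "bal_leaf (fst p) v \<and> v \<notin> set (snd p)")
      case True
      have sd: "seed p = seed (remove_leaf (fst p) v, snd p)"
        using ex True by (subst seed.simps) (simp add: v_def Let_def)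
      have st: "Inv (remove_leaf s1 v, s2) \<and> Phi \<mu> (prs s1) (prs s2) = Phi \<mu> (prs (remove_leaf s1 v)) (prs s2)"
        using leaf_step1[of s1 s2 v \<mu>] "1.prems" True m2 p by simp
      have ih: "Phi \<mu> (prs (remove_leaf s1 v)) (prs s2) = RR \<mu> (seed (remove_leaf s1 v, s2))"
        using "1.IH"(1)[OF ex v_def True] st p by simp
      show ?thesis using sd st ih p by simp
    next
      case False
      then have bl: "bal_leaf (snd p) v \<and> v \<notin> set (fst p)" using pl unfolding pair_leaf_def by blast
      have sd: "seed p = seed (fst p, remove_leaf (snd p) v)"
        using ex False by (subst seed.simps) (auto simp: v_def Let_def)
      have st: "Inv (s1, remove_leaf s2 v) \<and> Phi \<mu> (prs s1) (prs s2) = Phi \<mu> (prs s1) (prs (remove_leaf s2 v))"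
        using leaf_step2[of s1 s2 v \<mu>] "1.prems" bl m2 p by simp
      have ih: "Phi \<mu> (prs s1) (prs (remove_leaf s2 v)) = RR \<mu> (seed (s1, remove_leaf s2 v))"
        using "1.IH"(2)[OF ex v_def False] st p by simp
      show ?thesis using sd st ih p by simp
    qed
  next
    case False
    have "seed p = p" using False by (subst seed.simps) auto
    then show ?thesis using noleaf[of s1 s2 \<mu>] "1.prems" False m1 m2 p by simp
  qed
qed



lemma interleave_Cons: "interleave (x # xs) (y # ys) = x # y # interleave xs ys"
  by (simp add: interleave_def)

lemma interleave_props:
  assumes "length xs = length ys"
  shows "length (interleave xs ys) = 2 * length xs \<and> set (interleave xs ys) = set xs \<union> set ys \<and>
         (\<forall>a < length xs. interleave xs ys ! (2 * a) = xs ! a \<and> interleave xs ys ! (2 * a + 1) = ys ! a)"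
  using assms
proof (induction xs ys rule: list_induct2)
  case Nil
  then show ?case by (simp add: interleave_def)
next
  case (Cons x xs y ys)
  have "\<forall>a < length (x # xs). interleave (x # xs) (y # ys) ! (2 * a) = (x # xs) ! a \<and>
          interleave (x # xs) (y # ys) ! (2 * a + 1) = (y # ys) ! a"
  proof (intro allI impI)
    fix a assume a: "a < length (x # xs)"
    show "interleave (x # xs) (y # ys) ! (2 * a) = (x # xs) ! a \<and>
          interleave (x # xs) (y # ys) ! (2 * a + 1) = (y # ys) ! a"
    proof (cases a)
      case 0
      then show ?thesis by (simp add: interleave_Cons)
    next
      case (Suc b)
      then have "b < length xs" using a by simp
      moreover have "2 * a = Suc (Suc (2 * b))" "2 * a + 1 = Suc (Suc (2 * b + 1))" using Suc by simp_all
      ultimately show ?thesis using Cons.IH Suc by (simp add: interleave_Cons)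
    qed
  qed
  then show ?case using Cons.IH by (auto simp: interleave_Cons)
qed

lemma prod_pairs: "(\<Prod>q<2 * (n::nat). h q) = (\<Prod>a<n. h (2 * a) * (h (2 * a + 1) :: real))"
  by (induction n) (simp_all add: ac_simps)

lemma prod_list_upt: "prod_list (map h [0..<L]) = (\<Prod>q<L. (h q :: real))"
  by (induction L) simp_all

lemma prod_mset_prs:
  "prod_mset (image_mset g (prs w)) = (\<Prod>q<length w. (g (stp w (int q)) :: real))"
proof -
  have "image_mset g (prs w) = mset (map g (map (\<lambda>q. stp w (int q)) [0..<length w]))"
    by (simp only: prs_def mset_map)
  then have "prod_mset (image_mset g (prs w)) = prod_list (map g (map (\<lambda>q. stp w (int q)) [0..<length w]))"
    by (simp only: prod_mset_prod_list)
  also have "\<dots> = (\<Prod>q<length w. g (stp w (int q)))"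
    by (simp only: map_map o_def prod_list_upt)
  finally show ?thesis .
qed

lemma cyc_prod_prs:
  fixes Y :: "nat \<Rightarrow> nat \<Rightarrow> 'a \<Rightarrow> real"
  assumes len: "length xs = length ks" "length xs \<ge> 1"
  shows "cyc_prod Y xs ks \<omega> = prod_mset (image_mset (\<lambda>e. Y (fst e) (snd e) \<omega>) (prs (interleave xs ks)))"
proof -
  define n where "n = length xs"
  define w where "w = interleave xs ks"
  have ip: "length w = 2 * n" "\<forall>a < n. w ! (2 * a) = xs ! a \<and> w ! (2 * a + 1) = ks ! a"
    using interleave_props[OF len(1)] by (auto simp: w_def n_def)
  have n1: "n \<ge> 1" using len by (simp add: n_def)
  have "prod_mset (image_mset (\<lambda>e. Y (fst e) (snd e) \<omega>) (prs w)) =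
        (\<Prod>q<2 * n. Y (fst (stp w (int q))) (snd (stp w (int q))) \<omega>)"
    by (simp add: prod_mset_prs ip(1))
  also have "\<dots> = (\<Prod>a<n. Y (fst (stp w (int (2 * a)))) (snd (stp w (int (2 * a)))) \<omega> *
                           Y (fst (stp w (int (2 * a + 1)))) (snd (stp w (int (2 * a + 1)))) \<omega>)"
    by (rule prod_pairs)
  also have "\<dots> = (\<Prod>a<n. Y (xs ! a) (ks ! a) \<omega> * Y (xs ! ((a + 1) mod n)) (ks ! a) \<omega>)"
  proof (rule prod.cong[OF refl])
    fix a assume "a \<in> {..<n}"
    then have a: "a < n" by simp
    have c0: "cyc w (int (2 * a)) = xs ! a" using ip a cyc_nth[of "2 * a" w] by simp
    have c1: "cyc w (int (2 * a) + 1) = ks ! a"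
      using ip a cyc_nth[of "2 * a + 1" w] by (simp add: add.commute)
    have "(2 * a + 2) mod (2 * n) = 2 * ((a + 1) mod n)" by (simp add: mult_mod_right)
    moreover have "(a + 1) mod n < n" using n1 by simp
    ultimately have c2: "cyc w (int (2 * a + 1) + 1) = xs ! ((a + 1) mod n)"
      using ip cyc_nat[of w "2 * a + 2"] by (simp add: add.commute)
    have s0: "stp w (int (2 * a)) = (xs ! a, ks ! a)" using c0 c1 by (simp add: stp_def)
    have s1: "stp w (int (2 * a + 1)) = (xs ! ((a + 1) mod n), ks ! a)"
    proof -
      have "int (2 * a + 1) = int (2 * a) + 1" by simp
      then have "cyc w (int (2 * a + 1)) = ks ! a" using c1 by (simp add: ac_simps)
      then show ?thesis using c2 by (simp add: stp_def)
    qed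
    show "Y (fst (stp w (int (2 * a)))) (snd (stp w (int (2 * a)))) \<omega> *
          Y (fst (stp w (int (2 * a + 1)))) (snd (stp w (int (2 * a + 1)))) \<omega> =
          Y (xs ! a) (ks ! a) \<omega> * Y (xs ! ((a + 1) mod n)) (ks ! a) \<omega>"
      by (simp only: s0 s1 fst_conv snd_conv)
  qed
  also have "\<dots> = cyc_prod Y xs ks \<omega>" by (simp add: cyc_prod_def n_def)
  finally show ?thesis by (simp add: w_def)
qed



lemma abs_pow_bound:
  fixes y :: real
  assumes "n \<le> 2 * l"
  shows "\<bar>y\<bar> ^ n \<le> 1 + y ^ (2 * l)"
proof -
  have nn: "0 \<le> y ^ (2 * l)" by (simp add: power_mult)
  show ?thesis
  proof (cases "\<bar>y\<bar> \<le> 1")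
    case True
    then have "\<bar>y\<bar> ^ n \<le> 1" by (simp add: power_le_one)
    then show ?thesis using nn by linarith
  next
    case False
    then have "\<bar>y\<bar> ^ n \<le> \<bar>y\<bar> ^ (2 * l)" using assms by (intro power_increasing) auto
    also have "\<dots> = y ^ (2 * l)" by (simp add: power_even_abs)
    finally show ?thesis by simp
  qed
qed

lemma mom_integrable:
  assumes P: "prob_space M" and Ym: "X \<in> borel_measurable M"
    and I: "integrable M (\<lambda>x. X x ^ (2 * l))" and n: "n \<le> 2 * l"
  shows "integrable M (\<lambda>x. (X x :: real) ^ n)"
proof (rule Bochner_Integration.integrable_bound)
  interpret prob_space M by (rule P)
  show "integrable M (\<lambda>x. 1 + X x ^ (2 * l))" using I by simp
  show "(\<lambda>x. X x ^ n) \<in> borel_measurable M" using Ym by simp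
  show "AE x in M. norm (X x ^ n) \<le> norm (1 + X x ^ (2 * l))"
  proof (rule AE_I2)
    fix x
    have "0 \<le> X x ^ (2 * l)" by (simp add: power_mult)
    then show "norm (X x ^ n) \<le> norm (1 + X x ^ (2 * l))"
      using abs_pow_bound[OF n, of "X x"] by (simp add: power_abs)
  qed
qed

lemma mom_ab:
  fixes Y :: "nat \<Rightarrow> nat \<Rightarrow> 'a \<Rightarrow> real"
  assumes P: "prob_space M"
    and meas: "\<And>a b. a \<ge> 1 \<Longrightarrow> b \<ge> 1 \<Longrightarrow> Y a b \<in> borel_measurable M"
    and D: "\<And>a b. a \<ge> 1 \<Longrightarrow> b \<ge> 1 \<Longrightarrow> distr M borel (Y a b) = distr M borel (Y 1 1)"
    and I: "integrable M (\<lambda>x. Y 1 1 x ^ (2 * l))"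
    and ab: "a \<ge> 1" "b \<ge> 1" and n: "n \<le> 2 * l"
  shows "integrable M (\<lambda>x. Y a b x ^ n) \<and> integral\<^sup>L M (\<lambda>x. Y a b x ^ n) = integral\<^sup>L M (\<lambda>x. Y 1 1 x ^ n)"
proof
  have m11: "Y 1 1 \<in> borel_measurable M" using meas by simp
  have mab: "Y a b \<in> borel_measurable M" using meas ab by simp
  have pm: "(\<lambda>x::real. x ^ n) \<in> borel_measurable borel" by simp
  have "integrable M (\<lambda>x. Y 1 1 x ^ n)" by (rule mom_integrable[OF P m11 I n])
  then have "integrable (distr M borel (Y 1 1)) (\<lambda>x. x ^ n)" using integrable_distr_eq[OF m11 pm] by simp
  then have "integrable (distr M borel (Y a b)) (\<lambda>x. x ^ n)" using D[OF ab] by simp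
  then show "integrable M (\<lambda>x. Y a b x ^ n)" using integrable_distr_eq[OF mab pm] by simp
  have "integral\<^sup>L M (\<lambda>x. Y a b x ^ n) = integral\<^sup>L (distr M borel (Y a b)) (\<lambda>x. x ^ n)"
    using integral_distr[OF mab pm] by simp
  also have "\<dots> = integral\<^sup>L (distr M borel (Y 1 1)) (\<lambda>x. x ^ n)" using D[OF ab] by simp
  also have "\<dots> = integral\<^sup>L M (\<lambda>x. Y 1 1 x ^ n)" using integral_distr[OF m11 pm] by simp
  finally show "integral\<^sup>L M (\<lambda>x. Y a b x ^ n) = integral\<^sup>L M (\<lambda>x. Y 1 1 x ^ n)" .
qed

lemma EP_integral:
  fixes Y :: "nat \<Rightarrow> nat \<Rightarrow> 'a \<Rightarrow> real"
  assumes P: "prob_space M"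
    and meas: "\<And>a b. a \<ge> 1 \<Longrightarrow> b \<ge> 1 \<Longrightarrow> Y a b \<in> borel_measurable M"
    and ind: "prob_space.indep_vars M (\<lambda>_. borel) (\<lambda>(a, b). Y a b) {(a, b). a \<ge> 1 \<and> b \<ge> 1}"
    and D: "\<And>a b. a \<ge> 1 \<Longrightarrow> b \<ge> 1 \<Longrightarrow> distr M borel (Y a b) = distr M borel (Y 1 1)"
    and I: "integrable M (\<lambda>x. Y 1 1 x ^ (2 * l))"
    and F: "\<And>e. e \<in># F \<Longrightarrow> fst e \<ge> 1 \<and> snd e \<ge> 1" and sz: "size F \<le> 2 * l"
  shows "integral\<^sup>L M (\<lambda>\<omega>. prod_mset (image_mset (\<lambda>e. Y (fst e) (snd e) \<omega>) F))
           = EP (\<lambda>n. integral\<^sup>L M (\<lambda>x. Y 1 1 x ^ n)) F"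
proof -
  define X where "X = (\<lambda>e \<omega>. Y (fst e) (snd e) \<omega> ^ count F e)"
  have eq: "(\<lambda>\<omega>. prod_mset (image_mset (\<lambda>e. Y (fst e) (snd e) \<omega>) F)) = (\<lambda>\<omega>. \<Prod>e\<in>set_mset F. X e \<omega>)"
    by (simp add: image_prod_mset_multiplicity X_def)
  have sub: "set_mset F \<subseteq> {(a, b). a \<ge> 1 \<and> b \<ge> 1}" using F by force
  have ind2: "prob_space.indep_vars M (\<lambda>_. borel) (\<lambda>(a, b). Y a b) (set_mset F)"
    using prob_space.indep_vars_subset[OF P ind sub] .
  have ind3: "prob_space.indep_vars M (\<lambda>_. borel) (\<lambda>e x. ((\<lambda>(a, b). Y a b) e x) ^ count F e) (set_mset F)"
    by (rule prob_space.indep_vars_compose2[OF P ind2]) simp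
  have "(\<lambda>e x. ((\<lambda>(a, b). Y a b) e x) ^ count F e) = X"
    by (intro ext) (simp add: X_def split_beta)
  then have ind4: "prob_space.indep_vars M (\<lambda>_. borel) X (set_mset F)" using ind3 by simp
  have cnt: "count F e \<le> 2 * l" for e using sz count_le_size[of F e] by simp
  have mom: "integrable M (X e) \<and> integral\<^sup>L M (X e) = integral\<^sup>L M (\<lambda>x. Y 1 1 x ^ count F e)"
    if "e \<in> set_mset F" for e
    using mom_ab[where Y=Y and M=M and l=l and a="fst e" and b="snd e" and n="count F e", OF P meas D I]
      F[of e] that cnt[of e]
    by (simp add: X_def)
  have "integral\<^sup>L M (\<lambda>\<omega>. \<Prod>e\<in>set_mset F. X e \<omega>) = (\<Prod>e\<in>set_mset F. integral\<^sup>L M (X e))"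
    using prob_space.indep_vars_lebesgue_integral[OF P _ ind4] mom by simp
  also have "\<dots> = EP (\<lambda>n. integral\<^sup>L M (\<lambda>x. Y 1 1 x ^ n)) F"
    unfolding EP_def using mom by (intro prod.cong) auto
  finally show ?thesis using eq by simp
qed



theorem proposition7p5:
  fixes M :: "'a measure" and Y :: "nat \<Rightarrow> nat \<Rightarrow> 'a \<Rightarrow> real"
    and l1 l2 :: nat and V :: "nat set" and i k j m :: "nat list"
  assumes "prob_space M"
    and "\<And>a b. a \<ge> 1 \<Longrightarrow> b \<ge> 1 \<Longrightarrow> Y a b \<in> borel_measurable M"
    and "prob_space.indep_vars M (\<lambda>_. borel) (\<lambda>(a, b). Y a b) {(a, b). a \<ge> 1 \<and> b \<ge> 1}"
    and "\<And>a b. a \<ge> 1 \<Longrightarrow> b \<ge> 1 \<Longrightarrow> distr M borel (Y a b) = distr M borel (Y 1 1)"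
    and "integrable M (Y 1 1)" and "integral\<^sup>L M (Y 1 1) = 0"
    and "integrable M (\<lambda>x. Y 1 1 x ^ 2)" and "integral\<^sup>L M (\<lambda>x. Y 1 1 x ^ 2) = 1"
    and "integrable M (\<lambda>x. Y 1 1 x ^ (2 * (l1 + l2)))"
    and "l1 \<ge> 1" and "l2 \<ge> 1"
    and "finite V" and "card V = l1 + l2" and "0 \<notin> V"
    and "length i = l1" and "length k = l1" and "length j = l2" and "length m = l2"
    and "set i \<subseteq> V" and "set k \<subseteq> V" and "set j \<subseteq> V" and "set m \<subseteq> V"
    and "card (set i \<union> set k \<union> set j \<union> set m) \<ge> l1 + l2"
  shows "integral\<^sup>L M (\<lambda>x. cyc_prod Y i k x * cyc_prod Y j m x)
           - integral\<^sup>L M (cyc_prod Y i k) * integral\<^sup>L M (cyc_prod Y j m)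
         = (if card (set i \<union> set k \<union> set j \<union> set m) > l1 + l2 then 0
            else if double_2_ring 2 (seed (interleave i k, interleave j m))
              then integral\<^sup>L M (\<lambda>x. Y 1 1 x ^ 4) - 1
            else if \<exists>l0. even l0 \<and> l0 \<ge> 4 \<and> double_1_ring l0 (seed (interleave i k, interleave j m))
              then 1
            else if \<exists>l0. even l0 \<and> l0 \<ge> 4 \<and> double_2_ring l0 (seed (interleave i k, interleave j m))
              then 1
            else 0)"
proof -
  note P = assms(1) and meas = assms(2) and ind = assms(3) and D = assms(4)
  define l where "l = l1 + l2"
  define \<mu> where "\<mu> = (\<lambda>n. integral\<^sup>L M (\<lambda>x. Y 1 1 x ^ n))"
  define w1 where "w1 = interleave i k"
  define w2 where "w2 = interleave j m"
  have I2: "integrable M (\<lambda>x. Y 1 1 x ^ (2 * l))" using assms(9) by (simp add: l_def)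
  have ip1: "length w1 = 2 * l1" "set w1 = set i \<union> set k"
    using interleave_props[of i k] assms(15,16) by (auto simp: w1_def)
  have ip2: "length w2 = 2 * l2" "set w2 = set j \<union> set m"
    using interleave_props[of j m] assms(17,18) by (auto simp: w2_def)
  have sV: "set w1 \<union> set w2 \<subseteq> V" using ip1 ip2 assms(19-22) by auto
  have cardU: "card (set i \<union> set k \<union> set j \<union> set m) = l1 + l2"
  proof -
    have "card (set i \<union> set k \<union> set j \<union> set m) \<le> card V"
      using assms(12,19-22) by (intro card_mono) auto
    then show ?thesis using assms(13,23) by simp
  qed
  have inv: "Inv (w1, w2)"
  proof -
    have "set w1 \<union> set w2 = set i \<union> set k \<union> set j \<union> set m" using ip1 ip2 by auto
    then show ?thesis using ip1 ip2 cardU assms(10,11) by (simp add: Inv_def)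
  qed
  have F: "fst e \<ge> 1 \<and> snd e \<ge> 1" if "e \<in># prs w1 + prs w2" for e
  proof -
    have "fst e \<in> set w1 \<union> set w2 \<and> snd e \<in> set w1 \<union> set w2"
      using that prs_set[of e w1] prs_set[of e w2] by auto
    then have "fst e \<in> V \<and> snd e \<in> V" using sV by auto
    then show ?thesis using assms(14) by (metis less_one not_le)
  qed
  have sz1: "size (prs w1) = 2 * l1" using ip1 by (simp add: prs_def)
  have sz2: "size (prs w2) = 2 * l2" using ip2 by (simp add: prs_def)
  define g where "g = (\<lambda>\<omega> e. Y (fst e) (snd e) \<omega>)"
  have cp1: "cyc_prod Y i k \<omega> = prod_mset (image_mset (g \<omega>) (prs w1))" for \<omega>
    using cyc_prod_prs[of i k Y \<omega>] assms(10,15,16) by (simp add: w1_def g_def)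
  have cp2: "cyc_prod Y j m \<omega> = prod_mset (image_mset (g \<omega>) (prs w2))" for \<omega>
    using cyc_prod_prs[of j m Y \<omega>] assms(11,17,18) by (simp add: w2_def g_def)
  have EPI: "integral\<^sup>L M (\<lambda>\<omega>. prod_mset (image_mset (g \<omega>) G)) = EP \<mu> G"
    if "\<And>e. e \<in># G \<Longrightarrow> fst e \<ge> 1 \<and> snd e \<ge> 1" "size G \<le> 2 * l" for G
    using EP_integral[OF P meas ind D I2 that] by (simp add: g_def \<mu>_def)
  have L12: "integral\<^sup>L M (\<lambda>x. cyc_prod Y i k x * cyc_prod Y j m x) = EP \<mu> (prs w1 + prs w2)"
  proof -
    have "(\<lambda>x. cyc_prod Y i k x * cyc_prod Y j m x) = (\<lambda>\<omega>. prod_mset (image_mset (g \<omega>) (prs w1 + prs w2)))"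
      by (simp add: cp1 cp2)
    then show ?thesis using EPI[of "prs w1 + prs w2"] F sz1 sz2 by (simp add: l_def)
  qed
  have L1: "integral\<^sup>L M (cyc_prod Y i k) = EP \<mu> (prs w1)"
  proof -
    have "cyc_prod Y i k = (\<lambda>\<omega>. prod_mset (image_mset (g \<omega>) (prs w1)))" by (simp add: cp1 fun_eq_iff)
    then show ?thesis using EPI[of "prs w1"] F sz1 by (simp add: l_def)
  qed
  have L2: "integral\<^sup>L M (cyc_prod Y j m) = EP \<mu> (prs w2)"
  proof -
    have "cyc_prod Y j m = (\<lambda>\<omega>. prod_mset (image_mset (g \<omega>) (prs w2)))" by (simp add: cp2 fun_eq_iff)
    then show ?thesis using EPI[of "prs w2"] F sz2 by (simp add: l_def)
  qed
  have m1: "\<mu> 1 = 0" using assms(6) by (simp add: \<mu>_def)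
  have m2: "\<mu> 2 = 1" using assms(8) by (simp add: \<mu>_def)
  have main: "Phi \<mu> (prs w1) (prs w2) = RR \<mu> (seed (w1, w2))"
    using seed_main[where \<mu>=\<mu>, OF m1 m2 inv] by simp
  have lhs: "integral\<^sup>L M (\<lambda>x. cyc_prod Y i k x * cyc_prod Y j m x)
           - integral\<^sup>L M (cyc_prod Y i k) * integral\<^sup>L M (cyc_prod Y j m) = Phi \<mu> (prs w1) (prs w2)"
    by (simp add: L12 L1 L2 Phi_def)
  have nc: "\<not> (card (set i \<union> set k \<union> set j \<union> set m) > l1 + l2)" using cardU by simp
  have R: "RR \<mu> (seed (w1, w2)) =
     (if double_2_ring 2 (seed (interleave i k, interleave j m))
              then integral\<^sup>L M (\<lambda>x. Y 1 1 x ^ 4) - 1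
            else if \<exists>l0. even l0 \<and> l0 \<ge> 4 \<and> double_1_ring l0 (seed (interleave i k, interleave j m))
              then 1
            else if \<exists>l0. even l0 \<and> l0 \<ge> 4 \<and> double_2_ring l0 (seed (interleave i k, interleave j m))
              then 1
            else 0)"
    by (simp only: RR_def \<mu>_def w1_def w2_def)
  show ?thesis
    by (subst if_not_P[OF nc]) (simp only: lhs main R)
qed

end
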